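(* Let $g_c$ be a density generator, $\mu\in\mathbb{R}$, $\sigma>0$, $\rho\in(-1,1)$, and set $\sigma_\rho=\sigma\sqrt{2(1-\rho)}$. Let $Z_\rho$ be the random variable and $A$, $A^{-1}$ the functions defined in the context. Then $A^{-1}(Z_\rho)\sim {\rm ULS}(\sigma_\rho,g_c)$. Conversely, if $W\sim {\rm ULS}(\sigma_\rho,g_c)$, then $A(W)$ has the same distribution as $Z_\rho$.
   Context: A density generator is a function $g_c:[0,\infty)\to[0,\infty)$ with $0<\int_0^\infty g_c(u)\,{\rm d}u<\infty$; put $Z_{g_c}=\pi\int_0^\infty g_c(u)\,{\rm d}u$ and $\eta=\exp(\mu)$. A random variable $W$ with support $(0,1)$ follows the unit-log-symmetric distribution ${\rm ULS}(\sigma_\rho,g_c)$ if its PDF is $$f_W(w)=\frac{1}{w(1-w)\sigma^2\sqrt{1-\rho^2}\,Z_{g_c}}\int_0^\infty \frac1t\, g_c\!\left(\frac{\tilde t_w^{\,2}-2\rho\tilde t_w\tilde t+\tilde t^{\,2}}{1-\rho^2}\right){\rm d}t,\quad 0<w<1,$$ where $t_w=\frac{w}{1-w}t$, $\tilde t_w=\frac1\sigma\log(t_w/\eta)$, $\tilde t=\frac1\sigma\log(t/\eta)$. Let $U_1,U_2,R,D$ be mutually independent with $\mathbb{P}(U_i=-1)=\mathbb{P}(U_i=1)=1/2$, $D$ having PDF $2/(\pi\sqrt{1-d^2})$ on $(0,1)$, and $R$ having PDF $2rg_c(r^2)/\int_0^\infty g_c(u)\,{\rm d}u$ on $(0,\infty)$.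 Set $Z_1=RDU_1$, $Z_2=R\sqrt{1-D^2}\,U_2$ and $$Z_\rho=\frac{1}{\sqrt{2(1-\rho)}}\big[(1-\rho)Z_1-\sqrt{1-\rho^2}\,Z_2\big].$$ Define $A(w)=\frac{1}{\sigma_\rho}\log\frac{w}{1-w}$ for $w\in(0,1)$, with inverse $A^{-1}(x)=\frac{1}{1+\exp(-\sigma_\rho x)}$ for $x\in\mathbb{R}$. *)

theory Defs
  imports "HOL-Probability.Probability"
begin

definition density_generator :: "(real \<Rightarrow> real) \<Rightarrow> bool" where
  "density_generator g \<longleftrightarrow> g \<in> borel_measurable borel \<and> (\<forall>u\<ge>0. 0 \<le> g u) \<and>
     set_integrable lborel {0..} g \<and> 0 < (LINT u:{0..}|lborel. g u)"

definition Zg :: "(real \<Rightarrow> real) \<Rightarrow> real" where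
  "Zg g = pi * (LINT u:{0..}|lborel. g u)"

definition uls_pdf :: "real \<Rightarrow> real \<Rightarrow> real \<Rightarrow> (real \<Rightarrow> real) \<Rightarrow> real \<Rightarrow> ennreal" where
  "uls_pdf mu sig rho g w =
    (if 0 < w \<and> w < 1 then
       ennreal (1 / (w * (1 - w) * sig\<^sup>2 * sqrt (1 - rho\<^sup>2) * Zg g)) *
       (\<integral>\<^sup>+ t. indicator {0<..} t *
          ennreal ((1 / t) *
            (let eta = exp mu;
                 tw = w / (1 - w) * t;
                 ttw = (1 / sig) * ln (tw / eta);
                 tt = (1 / sig) * ln (t / eta)
             in g ((ttw\<^sup>2 - 2 * rho * ttw * tt + tt\<^sup>2) / (1 - rho\<^sup>2)))) \<partial>lborel)
     else 0)"

definition A_map :: "real \<Rightarrow> real \<Rightarrow> real" where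
  "A_map sigrho w = (1 / sigrho) * ln (w / (1 - w))"

definition A_inv :: "real \<Rightarrow> real \<Rightarrow> real" where
  "A_inv sigrho x = 1 / (1 + exp (- sigrho * x))"

end

theory Submission
  imports Defs
begin

lemma SUP_indicator_mult:
  fixes F :: "real \<Rightarrow> ennreal"
  assumes "incseq A"
  shows "(SUP n. F x * indicator (A n) x) = F x * indicator (\<Union>n. A n) x"
proof (cases "x \<in> (\<Union>n. A n)")
  case True
  then obtain n where n: "x \<in> A n" by auto
  show ?thesis
  proof (rule antisym)
    show "(SUP n. F x * indicator (A n) x) \<le> F x * indicator (\<Union>n. A n) x"
      using True by (intro SUP_least) (auto split: split_indicator)
    have "F x * indicator (\<Union>n. A n) x = F x * indicator (A n) x" using True n by (simp)
    also have "\<dots> \<le> (SUP n. F x * indicator (A n) x)" by (rule SUP_upper) simp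
    finally show "F x * indicator (\<Union>n. A n) x \<le> (SUP n. F x * indicator (A n) x)" .
  qed
next
  case False
  then show ?thesis by (auto split: split_indicator)
qed

lemma incseq_mult_indicator:
  fixes F :: "'b \<Rightarrow> ennreal"
  assumes "incseq A" shows "incseq (\<lambda>n x. F x * indicator (A n) x)"
proof -
  have "F x * indicator (A m) x \<le> F x * indicator (A n) x" if "m \<le> n" for m n x
  proof -
    have "A m \<subseteq> A n" using assms that by (simp add: incseq_def)
    then show ?thesis by (cases "x \<in> A m") auto
  qed
  then show ?thesis by (auto simp: incseq_def le_fun_def)
qed

lemma nn_subst_open:
  fixes f :: "real \<Rightarrow> ennreal" and \<phi> \<phi>' :: "real \<Rightarrow> real" and l u :: "nat \<Rightarrow> real"
  assumes f[measurable]: "f \<in> borel_measurable borel"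
    and phim[measurable]: "\<phi> \<in> borel_measurable borel" and phim'[measurable]: "\<phi>' \<in> borel_measurable borel"
    and l: "decseq l" and u: "incseq u" and lu: "\<And>n. l n < u n"
    and S: "S = (\<Union>n. {l n..u n})"
    and deriv: "\<And>x. x \<in> S \<Longrightarrow> (\<phi> has_real_derivative \<phi>' x) (at x)"
    and cont: "continuous_on S \<phi>'"
    and nonneg: "\<And>x. x \<in> S \<Longrightarrow> 0 \<le> \<phi>' x"
    and T: "\<phi> ` S = T"
  shows "(\<integral>\<^sup>+x. f (\<phi> x) * ennreal (\<phi>' x) * indicator S x \<partial>lborel) = (\<integral>\<^sup>+y. f y * indicator T y \<partial>lborel)"
proof -
  have incI: "incseq (\<lambda>n. {l n..u n})"
    using l u by (auto simp: incseq_def decseq_def intro: order_trans)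
  have sub: "{l n..u n} \<subseteq> S" for n using S by auto
  have mono: "\<phi> x \<le> \<phi> y" if "x \<in> {l n..u n}" "y \<in> {l n..u n}" "x \<le> y" for x y n
    by (rule deriv_nonneg_imp_mono[of x y \<phi> \<phi>']) (use that in \<open>auto intro!: deriv nonneg sub[of n, THEN subsetD]\<close>)
  have img: "\<phi> ` {l n..u n} = {\<phi> (l n)..\<phi> (u n)}" for n
  proof
    show "\<phi> ` {l n..u n} \<subseteq> {\<phi> (l n)..\<phi> (u n)}"
      using mono[of "l n" n] mono[of _ n "u n"] lu[of n] by auto
    show "{\<phi> (l n)..\<phi> (u n)} \<subseteq> \<phi> ` {l n..u n}"
    proof
      fix y assume y: "y \<in> {\<phi> (l n)..\<phi> (u n)}"
      have "continuous_on {l n..u n} \<phi>"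
        using deriv sub by (intro continuous_at_imp_continuous_on) (auto intro: DERIV_isCont)
      then obtain x where "l n \<le> x" "x \<le> u n" "\<phi> x = y"
        using IVT'[of \<phi> "l n" y "u n"] y lu[of n] by auto
      then show "y \<in> \<phi> ` {l n..u n}" by auto
    qed
  qed
  have TU: "T = (\<Union>n. {\<phi> (l n)..\<phi> (u n)})"
    proof -
    have "T = (\<Union>n. \<phi> ` {l n..u n})" using T S by (simp add: image_UN)
    then show ?thesis using img by simp
  qed
  have incJ: "incseq (\<lambda>n. {\<phi> (l n)..\<phi> (u n)})"
    proof -
    have "incseq (\<lambda>n. \<phi> ` {l n..u n})" using incI unfolding incseq_def by (metis image_mono)
    then show ?thesis using img by simp
  qed
  have "(\<integral>\<^sup>+x. f (\<phi> x) * ennreal (\<phi>' x) * indicator S x \<partial>lborel)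
      = (\<integral>\<^sup>+x. (SUP n. f (\<phi> x) * ennreal (\<phi>' x) * indicator {l n..u n} x) \<partial>lborel)"
    unfolding S by (subst SUP_indicator_mult[OF incI]) simp
  also have "\<dots> = (SUP n. \<integral>\<^sup>+x. f (\<phi> x) * ennreal (\<phi>' x) * indicator {l n..u n} x \<partial>lborel)"
  proof (rule nn_integral_monotone_convergence_SUP)
    show "incseq (\<lambda>n x. f (\<phi> x) * ennreal (\<phi>' x) * indicator {l n..u n} x)"
      by (rule incseq_mult_indicator[OF incI])
  qed simp
  also have "\<dots> = (SUP n. \<integral>\<^sup>+y. f y * indicator {\<phi> (l n)..\<phi> (u n)} y \<partial>lborel)"
  proof (rule SUP_cong[OF refl])
    fix n
    show "(\<integral>\<^sup>+x. f (\<phi> x) * ennreal (\<phi>' x) * indicator {l n..u n} x \<partial>lborel) =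
          (\<integral>\<^sup>+y. f y * indicator {\<phi> (l n)..\<phi> (u n)} y \<partial>lborel)"
      by (rule nn_integral_substitution_aux[symmetric])
         (use lu in \<open>auto intro: continuous_on_subset[OF cont] sub deriv nonneg intro!: deriv nonneg sub[of n, THEN subsetD]\<close>)
  qed
  also have "\<dots> = (\<integral>\<^sup>+y. (SUP n. f y * indicator {\<phi> (l n)..\<phi> (u n)} y) \<partial>lborel)"
  proof (rule nn_integral_monotone_convergence_SUP[symmetric])
    show "incseq (\<lambda>n y. f y * indicator {\<phi> (l n)..\<phi> (u n)} y)"
      by (rule incseq_mult_indicator[OF incJ])
  qed simp
  also have "\<dots> = (\<integral>\<^sup>+y. f y * indicator T y \<partial>lborel)"
    unfolding TU by (subst SUP_indicator_mult[OF incJ]) simp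
  finally show ?thesis .
qed

lemma nn_split_open:
  fixes F :: "real \<Rightarrow> ennreal"
  assumes [measurable]: "F \<in> borel_measurable borel" and "a \<le> m" "m \<le> b"
  shows "(\<integral>\<^sup>+x. F x * indicator {a<..<b} x \<partial>lborel) =
         (\<integral>\<^sup>+x. F x * indicator {a<..<m} x \<partial>lborel) + (\<integral>\<^sup>+x. F x * indicator {m<..<b} x \<partial>lborel)"
proof -
  have "(\<integral>\<^sup>+x. F x * indicator {a<..<b} x \<partial>lborel) =
        (\<integral>\<^sup>+x. F x * indicator {a<..<m} x + F x * indicator {m<..<b} x \<partial>lborel)"
  proof (rule nn_integral_cong_AE)
    show "AE x in lborel. F x * indicator {a<..<b} x = F x * indicator {a<..<m} x + F x * indicator {m<..<b} x"
      using AE_lborel_singleton[of m] by eventually_elim (use assms in \<open>auto split: split_indicator\<close>)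
  qed
  also have "\<dots> = (\<integral>\<^sup>+x. F x * indicator {a<..<m} x \<partial>lborel) + (\<integral>\<^sup>+x. F x * indicator {m<..<b} x \<partial>lborel)"
    by (rule nn_integral_add) auto
  finally show ?thesis .
qed

lemma nn_shift_open:
  fixes F :: "real \<Rightarrow> ennreal"
  assumes [measurable]: "F \<in> borel_measurable borel"
  shows "(\<integral>\<^sup>+x. F (x + c) * indicator {a<..<b} x \<partial>lborel) = (\<integral>\<^sup>+x. F x * indicator {a+c<..<b+c} x \<partial>lborel)"
proof -
  have "(\<integral>\<^sup>+x. F x * indicator {a+c<..<b+c} x \<partial>lborel) =
     ennreal \<bar>1\<bar> * (\<integral>\<^sup>+x. F (c + 1 * x) * indicator {a+c<..<b+c} (c + 1 * x) \<partial>lborel)"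
    by (rule nn_integral_real_affine) auto
  also have "\<dots> = (\<integral>\<^sup>+x. F (x + c) * indicator {a<..<b} x \<partial>lborel)"
    by (auto intro!: nn_integral_cong simp: add.commute split: split_indicator)
  finally show ?thesis by simp
qed

lemma nn_reflect_open:
  fixes F :: "real \<Rightarrow> ennreal"
  assumes [measurable]: "F \<in> borel_measurable borel"
  shows "(\<integral>\<^sup>+x. F (- x) * indicator {a<..<b} x \<partial>lborel) = (\<integral>\<^sup>+x. F x * indicator {-b<..<-a} x \<partial>lborel)"
proof -
  have "(\<integral>\<^sup>+x. F x * indicator {-b<..<-a} x \<partial>lborel) =
     ennreal \<bar>-1\<bar> * (\<integral>\<^sup>+x. F (0 + (-1) * x) * indicator {-b<..<-a} (0 + (-1) * x) \<partial>lborel)"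
    by (rule nn_integral_real_affine) auto
  also have "\<dots> = (\<integral>\<^sup>+x. F (- x) * indicator {a<..<b} x \<partial>lborel)"
    by (auto intro!: nn_integral_cong split: split_indicator)
  finally show ?thesis by simp
qed

definition pD :: "real \<Rightarrow> ennreal" where
  "pD d = indicator {0<..<1} d * ennreal (2 / (pi * sqrt (1 - d\<^sup>2)))"

definition pA :: "real \<Rightarrow> ennreal" where
  "pA t = indicator {-1<..<1} t * ennreal (1 / (pi * sqrt (1 - t\<^sup>2)))"

lemma pD_measurable[measurable]: "pD \<in> borel_measurable borel"
  unfolding pD_def by measurable

lemma pA_measurable[measurable]: "pA \<in> borel_measurable borel"
  unfolding pA_def by measurable

lemma pD_sin:
  fixes k :: "real \<Rightarrow> ennreal"
  assumes [measurable]: "k \<in> borel_measurable borel"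
  shows "(\<integral>\<^sup>+d. pD d * k d \<partial>lborel) = (\<integral>\<^sup>+x. ennreal (2/pi) * k (sin x) * indicator {0<..<pi/2} x \<partial>lborel)"
proof -
  have "(\<integral>\<^sup>+d. pD d * k d \<partial>lborel) = (\<integral>\<^sup>+d. (pD d * k d) * indicator {sin 0..sin (pi/2)} d \<partial>lborel)"
    by (auto intro!: nn_integral_cong simp: pD_def split: split_indicator)
  also have "\<dots> = (\<integral>\<^sup>+x. (pD (sin x) * k (sin x)) * ennreal (cos x) * indicator {0..pi/2} x \<partial>lborel)"
    by (rule nn_integral_substitution_aux)
       (auto intro!: derivative_eq_intros continuous_intros cos_ge_zero)
  also have "\<dots> = (\<integral>\<^sup>+x. ennreal (2/pi) * k (sin x) * indicator {0<..<pi/2} x \<partial>lborel)"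
  proof (rule nn_integral_cong)
    fix x :: real
    show "pD (sin x) * k (sin x) * ennreal (cos x) * indicator {0..pi/2} x =
          ennreal (2/pi) * k (sin x) * indicator {0<..<pi/2} x"
    proof (cases "0 < x \<and> x < pi/2")
      case True
      have c: "0 < cos x" using True by (intro cos_gt_zero) auto
      have s0: "0 < sin x" using True by (intro sin_gt_zero) auto
      have sq: "sqrt (1 - (sin x)\<^sup>2) = cos x" using c by (simp add: cos_squared_eq[symmetric])
      have s1: "sin x < 1"
      proof -
        have "(sin x)\<^sup>2 < 1" using c by (simp add: sin_squared_eq)
        then show ?thesis using s0 by (simp add: power_less_one_iff abs_square_less_1)
      qed
      have e: "pD (sin x) * ennreal (cos x) = ennreal (2/pi)"
        using s0 s1 c by (simp add: pD_def sq ennreal_mult''[symmetric] field_simps)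
      have "pD (sin x) * k (sin x) * ennreal (cos x) = (pD (sin x) * ennreal (cos x)) * k (sin x)"
        by (simp only: ac_simps)
      then show ?thesis unfolding e using True by (simp add: indicator_def)
    next
      case False
      then consider "x < 0 \<or> x > pi/2" | "x = 0" | "x = pi/2" by linarith
      then show ?thesis
      proof cases
        case 1 then show ?thesis by (auto simp: indicator_def)
      next
        case 2 then show ?thesis by (simp add: pD_def)
      next
        case 3
        then have "sin x = 1" by (simp only: sin_pi_half)
        moreover have "indicator {0<..<pi/2} x = (0::ennreal)" using 3 by simp
        ultimately show ?thesis by (simp add: pD_def)
      qed
    qed
  qed
  finally show ?thesis .
qed


lemma sqrt_one_minus_sin_sq:
  assumes "-(pi/2) \<le> x" "x \<le> pi/2"
  shows "sqrt (1 - (sin x)\<^sup>2) = cos x"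
proof -
  have "0 \<le> cos x" using assms by (intro cos_ge_zero) auto
  then show ?thesis by (simp add: cos_squared_eq[symmetric])
qed

lemma pA_sin:
  fixes k :: "real \<Rightarrow> ennreal"
  assumes [measurable]: "k \<in> borel_measurable borel"
  shows "(\<integral>\<^sup>+t. pA t * k t \<partial>lborel) = (\<integral>\<^sup>+x. ennreal (1/pi) * k (sin x) * indicator {-(pi/2)<..<pi/2} x \<partial>lborel)"
proof -
  have "(\<integral>\<^sup>+t. pA t * k t \<partial>lborel) = (\<integral>\<^sup>+t. (pA t * k t) * indicator {sin (-(pi/2))..sin (pi/2)} t \<partial>lborel)"
    by (auto intro!: nn_integral_cong simp: pA_def split: split_indicator)
  also have "\<dots> = (\<integral>\<^sup>+x. (pA (sin x) * k (sin x)) * ennreal (cos x) * indicator {-(pi/2)..pi/2} x \<partial>lborel)"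
    by (rule nn_integral_substitution_aux)
       (auto intro!: derivative_eq_intros continuous_intros cos_ge_zero)
  also have "\<dots> = (\<integral>\<^sup>+x. ennreal (1/pi) * k (sin x) * indicator {-(pi/2)<..<pi/2} x \<partial>lborel)"
  proof (rule nn_integral_cong)
    fix x :: real
    show "pA (sin x) * k (sin x) * ennreal (cos x) * indicator {-(pi/2)..pi/2} x =
          ennreal (1/pi) * k (sin x) * indicator {-(pi/2)<..<pi/2} x"
    proof (cases "-(pi/2) < x \<and> x < pi/2")
      case True
      have c: "0 < cos x" using True by (intro cos_gt_zero_pi) auto
      have sq: "sqrt (1 - (sin x)\<^sup>2) = cos x" using c by (simp add: cos_squared_eq[symmetric])
      have s1: "\<bar>sin x\<bar> < 1"
      proof -
        have "(sin x)\<^sup>2 < 1" using c by (simp add: sin_squared_eq)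
        then show ?thesis by (simp add: abs_square_less_1)
      qed
      have e: "pA (sin x) * ennreal (cos x) = ennreal (1/pi)"
        using s1 c by (simp add: pA_def sq ennreal_mult''[symmetric] field_simps abs_less_iff)
      have "pA (sin x) * k (sin x) * ennreal (cos x) = (pA (sin x) * ennreal (cos x)) * k (sin x)"
        by (simp only: ac_simps)
      then show ?thesis unfolding e using True by (simp add: indicator_def)
    next
      case False
      then consider "x < -(pi/2) \<or> x > pi/2" | "x = -(pi/2)" | "x = pi/2" by linarith
      then show ?thesis
      proof cases
        case 1 then show ?thesis by (auto simp: indicator_def)
      next
        case 2
        then have "sin x = -1" by (simp only: sin_minus sin_pi_half)
        moreover have "indicator {-(pi/2)<..<pi/2} x = (0::ennreal)" using 2 by simp
        ultimately show ?thesis by (simp add: pA_def)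
      next
        case 3
        then have "sin x = 1" by (simp only: sin_pi_half)
        moreover have "indicator {-(pi/2)<..<pi/2} x = (0::ennreal)" using 3 by simp
        ultimately show ?thesis by (simp add: pA_def)
      qed
    qed
  qed
  finally show ?thesis .
qed

lemma pD_sin_cong:
  fixes k :: "real \<Rightarrow> ennreal" and G :: "real \<Rightarrow> real" and G' :: "real \<Rightarrow> real"
  assumes [measurable]: "k \<in> borel_measurable borel" "G \<in> borel_measurable borel" "G' \<in> borel_measurable borel"
    and eq: "\<And>x. 0 < x \<Longrightarrow> x < pi/2 \<Longrightarrow> G (sin x) = G' x"
  shows "(\<integral>\<^sup>+d. pD d * k (G d) \<partial>lborel) = ennreal (2/pi) * (\<integral>\<^sup>+x. k (G' x) * indicator {0<..<pi/2} x \<partial>lborel)"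
proof -
  have "(\<integral>\<^sup>+d. pD d * k (G d) \<partial>lborel) = (\<integral>\<^sup>+x. ennreal (2/pi) * k (G (sin x)) * indicator {0<..<pi/2} x \<partial>lborel)"
    by (rule pD_sin[of "\<lambda>d. k (G d)"]) measurable
  also have "\<dots> = (\<integral>\<^sup>+x. ennreal (2/pi) * (k (G' x) * indicator {0<..<pi/2} x) \<partial>lborel)"
    by (intro nn_integral_cong) (auto simp: eq split: split_indicator)
  also have "\<dots> = ennreal (2/pi) * (\<integral>\<^sup>+x. k (G' x) * indicator {0<..<pi/2} x \<partial>lborel)"
    by (rule nn_integral_cmult) measurable
  finally show ?thesis .
qed

lemma arcsine_mix:
  fixes k :: "real \<Rightarrow> ennreal" and \<alpha> :: real
  assumes k[measurable]: "k \<in> borel_measurable borel" and \<alpha>: "0 < \<alpha>" "\<alpha> < pi/2"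
  defines "Tf \<equiv> (\<lambda>u1 u2 d. cos \<alpha> * d * u1 - sin \<alpha> * sqrt (1 - d\<^sup>2) * u2)"
  shows "(\<integral>\<^sup>+d. pD d * k (Tf 1 1 d) \<partial>lborel) + (\<integral>\<^sup>+d. pD d * k (Tf 1 (-1) d) \<partial>lborel)
       + (\<integral>\<^sup>+d. pD d * k (Tf (-1) 1 d) \<partial>lborel) + (\<integral>\<^sup>+d. pD d * k (Tf (-1) (-1) d) \<partial>lborel)
       = 4 * (\<integral>\<^sup>+t. pA t * k t \<partial>lborel)"
proof -
  define K where "K x = k (sin x) + k (- sin x)" for x
  have K[measurable]: "K \<in> borel_measurable borel" unfolding K_def by measurable
  have Tm[measurable]: "Tf u1 u2 \<in> borel_measurable borel" for u1 u2 unfolding Tf_def by measurable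
  have sq: "sqrt (1 - (sin x)\<^sup>2) = cos x" if "0 < x" "x < pi/2" for x
    using that by (intro sqrt_one_minus_sin_sq) auto
  define I where "I a b = (\<integral>\<^sup>+x. K x * indicator {a<..<b} x \<partial>lborel)" for a b
  have e1: "(\<integral>\<^sup>+d. pD d * k (Tf 1 1 d) \<partial>lborel) = ennreal (2/pi) * (\<integral>\<^sup>+x. k (sin (x - \<alpha>)) * indicator {0<..<pi/2} x \<partial>lborel)"
    by (rule pD_sin_cong) (auto simp: Tf_def sq sin_diff algebra_simps)
  have e2: "(\<integral>\<^sup>+d. pD d * k (Tf 1 (-1) d) \<partial>lborel) = ennreal (2/pi) * (\<integral>\<^sup>+x. k (sin (x + \<alpha>)) * indicator {0<..<pi/2} x \<partial>lborel)"
    by (rule pD_sin_cong) (auto simp: Tf_def sq sin_add algebra_simps)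
  have e3: "(\<integral>\<^sup>+d. pD d * k (Tf (-1) 1 d) \<partial>lborel) = ennreal (2/pi) * (\<integral>\<^sup>+x. k (- sin (x + \<alpha>)) * indicator {0<..<pi/2} x \<partial>lborel)"
    by (rule pD_sin_cong) (auto simp: Tf_def sq sin_add algebra_simps)
  have e4: "(\<integral>\<^sup>+d. pD d * k (Tf (-1) (-1) d) \<partial>lborel) = ennreal (2/pi) * (\<integral>\<^sup>+x. k (- sin (x - \<alpha>)) * indicator {0<..<pi/2} x \<partial>lborel)"
    by (rule pD_sin_cong) (auto simp: Tf_def sq sin_diff algebra_simps)
  have p23: "(\<integral>\<^sup>+x. k (sin (x + \<alpha>)) * indicator {0<..<pi/2} x \<partial>lborel) + (\<integral>\<^sup>+x. k (- sin (x + \<alpha>)) * indicator {0<..<pi/2} x \<partial>lborel)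
      = (\<integral>\<^sup>+x. K (x + \<alpha>) * indicator {0<..<pi/2} x \<partial>lborel)"
    by (subst nn_integral_add[symmetric]) (auto simp: K_def distrib_right intro!: nn_integral_cong)
  have p14: "(\<integral>\<^sup>+x. k (sin (x - \<alpha>)) * indicator {0<..<pi/2} x \<partial>lborel) + (\<integral>\<^sup>+x. k (- sin (x - \<alpha>)) * indicator {0<..<pi/2} x \<partial>lborel)
      = (\<integral>\<^sup>+x. K (x + (-\<alpha>)) * indicator {0<..<pi/2} x \<partial>lborel)"
    by (subst nn_integral_add[symmetric]) (auto simp: K_def distrib_right intro!: nn_integral_cong)
  have s23: "(\<integral>\<^sup>+x. K (x + \<alpha>) * indicator {0<..<pi/2} x \<partial>lborel) = I \<alpha> (pi/2 + \<alpha>)"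
    unfolding I_def by (subst nn_shift_open) (auto simp: add.commute)
  have Keven: "K (- x) = K x" for x by (simp add: K_def add.commute)
  have Kper: "K (x + pi) = K x" for x by (simp add: K_def add.commute)
  have s14: "(\<integral>\<^sup>+x. K (x + (-\<alpha>)) * indicator {0<..<pi/2} x \<partial>lborel) = I (\<alpha> - pi/2) \<alpha>"
  proof -
    have "(\<integral>\<^sup>+x. K (x + (-\<alpha>)) * indicator {0<..<pi/2} x \<partial>lborel) = (\<integral>\<^sup>+x. K x * indicator {0 + - \<alpha><..<pi/2 + - \<alpha>} x \<partial>lborel)"
      by (rule nn_shift_open) simp
    also have "\<dots> = (\<integral>\<^sup>+x. K (- x) * indicator {\<alpha> - pi/2<..<\<alpha>} x \<partial>lborel)"
      by (subst nn_reflect_open) auto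
    also have "\<dots> = I (\<alpha> - pi/2) \<alpha>" unfolding I_def Keven ..
    finally show ?thesis .
  qed
  have sp1: "I (\<alpha> - pi/2) \<alpha> + I \<alpha> (pi/2 + \<alpha>) = I (\<alpha> - pi/2) (pi/2 + \<alpha>)"
    unfolding I_def by (rule nn_split_open[symmetric]) (use \<alpha> in auto)
  have sp2: "I (\<alpha> - pi/2) (pi/2 + \<alpha>) = I (\<alpha> - pi/2) (pi/2) + I (pi/2) (pi/2 + \<alpha>)"
    unfolding I_def by (rule nn_split_open) (use \<alpha> in auto)
  have sh: "I (pi/2) (pi/2 + \<alpha>) = I (-(pi/2)) (\<alpha> - pi/2)"
  proof -
    have "I (-(pi/2)) (\<alpha> - pi/2) = (\<integral>\<^sup>+x. K (x + pi) * indicator {-(pi/2)<..<\<alpha> - pi/2} x \<partial>lborel)"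
      unfolding I_def Kper ..
    also have "\<dots> = (\<integral>\<^sup>+x. K x * indicator {-(pi/2) + pi<..<\<alpha> - pi/2 + pi} x \<partial>lborel)"
      by (rule nn_shift_open) simp
    also have "\<dots> = I (pi/2) (pi/2 + \<alpha>)" unfolding I_def by (simp add: algebra_simps)
    finally show ?thesis ..
  qed
  have sp3: "I (-(pi/2)) (\<alpha> - pi/2) + I (\<alpha> - pi/2) (pi/2) = I (-(pi/2)) (pi/2)"
    unfolding I_def by (rule nn_split_open[symmetric]) (use \<alpha> in auto)
  define J where "J = (\<integral>\<^sup>+x. k (sin x) * indicator {-(pi/2)<..<pi/2} x \<partial>lborel)"
  have IJ: "I (-(pi/2)) (pi/2) = 2 * J"
  proof -
    have "I (-(pi/2)) (pi/2) = J + (\<integral>\<^sup>+x. k (- sin x) * indicator {-(pi/2)<..<pi/2} x \<partial>lborel)"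
      unfolding I_def J_def K_def
      by (subst nn_integral_add[symmetric]) (auto simp: distrib_right intro!: nn_integral_cong)
    also have "(\<integral>\<^sup>+x. k (- sin x) * indicator {-(pi/2)<..<pi/2} x \<partial>lborel)
             = (\<integral>\<^sup>+x. (\<lambda>y. k (sin y)) (- x) * indicator {-(pi/2)<..<pi/2} x \<partial>lborel)" by simp
    also have "\<dots> = J" unfolding J_def by (subst nn_reflect_open) auto
    finally show ?thesis by (simp add: mult_2)
  qed
  have pAJ: "(\<integral>\<^sup>+t. pA t * k t \<partial>lborel) = ennreal (1/pi) * J"
    unfolding J_def pA_sin[OF k] by (subst nn_integral_cmult[symmetric]) (auto simp: mult.assoc)
  have "(\<integral>\<^sup>+d. pD d * k (Tf 1 1 d) \<partial>lborel) + (\<integral>\<^sup>+d. pD d * k (Tf 1 (-1) d) \<partial>lborel)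
       + (\<integral>\<^sup>+d. pD d * k (Tf (-1) 1 d) \<partial>lborel) + (\<integral>\<^sup>+d. pD d * k (Tf (-1) (-1) d) \<partial>lborel)
      = ennreal (2/pi) * ((\<integral>\<^sup>+x. k (sin (x + \<alpha>)) * indicator {0<..<pi/2} x \<partial>lborel) + (\<integral>\<^sup>+x. k (- sin (x + \<alpha>)) * indicator {0<..<pi/2} x \<partial>lborel))
      + ennreal (2/pi) * ((\<integral>\<^sup>+x. k (sin (x - \<alpha>)) * indicator {0<..<pi/2} x \<partial>lborel) + (\<integral>\<^sup>+x. k (- sin (x - \<alpha>)) * indicator {0<..<pi/2} x \<partial>lborel))"
    unfolding e1 e2 e3 e4 by (simp add: distrib_left ac_simps)
  also have "\<dots> = ennreal (2/pi) * (I (\<alpha> - pi/2) \<alpha> + I \<alpha> (pi/2 + \<alpha>))"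
    unfolding p23 p14 s23 s14 by (simp add: distrib_left ac_simps)
  also have "\<dots> = ennreal (2/pi) * (2 * J)"
  proof -
    have "I (\<alpha> - pi/2) \<alpha> + I \<alpha> (pi/2 + \<alpha>) = 2 * J"
      unfolding sp1 sp2 sh using sp3 IJ by (simp add: add.commute)
    then show ?thesis by simp
  qed
  also have "\<dots> = 4 * (ennreal (1/pi) * J)"
  proof -
    have "ennreal (2/pi) * 2 = 4 * ennreal (1/pi)"
      by (simp add: ennreal_mult''[symmetric] ennreal_numeral[symmetric] del: ennreal_numeral)
    then show ?thesis by (metis mult.assoc mult.commute)
  qed
  finally show ?thesis unfolding pAJ .
qed

lemma nn_even_half:
  fixes G :: "real \<Rightarrow> ennreal"
  assumes [measurable]: "G \<in> borel_measurable borel" and ev: "\<And>y. G (- y) = G y"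
  shows "(\<integral>\<^sup>+y. G y \<partial>lborel) = 2 * (\<integral>\<^sup>+y. G y * indicator {0<..} y \<partial>lborel)"
proof -
  have "(\<integral>\<^sup>+y. G y \<partial>lborel) = (\<integral>\<^sup>+y. G y * indicator {..<0} y + G y * indicator {0<..} y \<partial>lborel)"
  proof (rule nn_integral_cong_AE)
    show "AE y in lborel. G y = G y * indicator {..<0} y + G y * indicator {0<..} y"
      using AE_lborel_singleton[of 0] by eventually_elim (auto split: split_indicator)
  qed
  also have "\<dots> = (\<integral>\<^sup>+y. G y * indicator {..<0} y \<partial>lborel) + (\<integral>\<^sup>+y. G y * indicator {0<..} y \<partial>lborel)"
    by (rule nn_integral_add) auto
  also have "(\<integral>\<^sup>+y. G y * indicator {..<0} y \<partial>lborel) = (\<integral>\<^sup>+y. G y * indicator {0<..} y \<partial>lborel)"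
  proof -
    have "(\<integral>\<^sup>+y. G y * indicator {..<0} y \<partial>lborel) =
       ennreal \<bar>-1\<bar> * (\<integral>\<^sup>+y. G (0 + (-1) * y) * indicator {..<0} (0 + (-1) * y) \<partial>lborel)"
      by (rule nn_integral_real_affine) auto
    also have "\<dots> = (\<integral>\<^sup>+y. G y * indicator {0<..} y \<partial>lborel)"
      by (auto intro!: nn_integral_cong simp: ev split: split_indicator)
    finally show ?thesis .
  qed
  finally show ?thesis by (simp add: mult_2)
qed

lemma radial_subst:
  fixes g :: "real \<Rightarrow> real" and z :: real and F :: "real \<Rightarrow> ennreal"
  assumes [measurable]: "F \<in> borel_measurable borel"
  shows "(\<integral>\<^sup>+y. F (sqrt (z\<^sup>2 + y\<^sup>2)) * ennreal (y / sqrt (z\<^sup>2 + y\<^sup>2)) * indicator {0<..} y \<partial>lborel)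
       = (\<integral>\<^sup>+r. F r * indicator {\<bar>z\<bar><..} r \<partial>lborel)"
proof (rule nn_subst_open[where l="\<lambda>n. 1 / (real n + 1)" and u="\<lambda>n. real n + 2"])
  show "decseq (\<lambda>n. 1 / (real n + 1))"
    by (auto simp: decseq_def intro!: divide_left_mono)
  show "incseq (\<lambda>n. real n + 2)" by (auto simp: incseq_def)
  show "1 / (real n + 1) < real n + 2" for n
  proof -
    have "1 / (real n + 1) \<le> 1" by (simp add: divide_le_eq)
    then show ?thesis by linarith
  qed
  show "{0<..} = (\<Union>n. {1 / (real n + 1)..real n + 2})"
  proof (intro equalityI subsetI)
    fix y :: real assume y: "y \<in> {0<..}"
    obtain n :: nat where n: "max y (1/y) < real n" using reals_Archimedean2 by blast
    have "1 / (real n + 1) \<le> y"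
    proof -
      have "1/y < real n + 1" using n by auto
      then show ?thesis using y by (simp add: field_simps)
    qed
    moreover have "y \<le> real n + 2" using n by auto
    ultimately show "y \<in> (\<Union>n. {1 / (real n + 1)..real n + 2})" by auto
  next
    fix y assume "y \<in> (\<Union>n. {1 / (real n + 1)..real n + 2})"
    then obtain n where "y \<in> {1 / (real n + 1)..real n + 2}" by auto
    moreover have "0 < 1 / (real n + 1)" by simp
    ultimately show "y \<in> {0<..}" by (meson atLeastAtMost_iff greaterThan_iff less_le_trans)
  qed
  show "((\<lambda>y. sqrt (z\<^sup>2 + y\<^sup>2)) has_real_derivative y / sqrt (z\<^sup>2 + y\<^sup>2)) (at y)" if "y \<in> {0<..}" for y
  proof -
    have p: "0 < z\<^sup>2 + y\<^sup>2" using that by (simp add: add_nonneg_pos)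
    have d1: "((\<lambda>y. z\<^sup>2 + y\<^sup>2) has_real_derivative 2 * y) (at y)"
      by (auto intro!: derivative_eq_intros)
    have d2: "(sqrt has_real_derivative inverse (sqrt (z\<^sup>2 + y\<^sup>2)) / 2) (at (z\<^sup>2 + y\<^sup>2))"
      by (rule DERIV_real_sqrt[OF p])
    have "((\<lambda>y. sqrt (z\<^sup>2 + y\<^sup>2)) has_real_derivative inverse (sqrt (z\<^sup>2 + y\<^sup>2)) / 2 * (2 * y)) (at y)"
      using DERIV_chain2[OF d2 d1] .
    then show ?thesis
      by (rule DERIV_cong) (simp add: field_simps)
  qed
  show "continuous_on {0<..} (\<lambda>y. y / sqrt (z\<^sup>2 + y\<^sup>2))"
    by (intro continuous_intros) (auto simp: add_nonneg_pos)
  show "0 \<le> y / sqrt (z\<^sup>2 + y\<^sup>2)" if "y \<in> {0<..}" for y using that by simp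
  show "(\<lambda>y. sqrt (z\<^sup>2 + y\<^sup>2)) ` {0<..} = {\<bar>z\<bar><..}"
  proof (intro equalityI subsetI)
    fix x assume "x \<in> (\<lambda>y. sqrt (z\<^sup>2 + y\<^sup>2)) ` {0<..}"
    then obtain y :: real where y: "y \<in> {0<..}" and x: "x = sqrt (z\<^sup>2 + y\<^sup>2)" by auto
    from y have "z\<^sup>2 < z\<^sup>2 + y\<^sup>2" by simp
    then have "sqrt (z\<^sup>2) < sqrt (z\<^sup>2 + y\<^sup>2)" by (rule real_sqrt_less_mono)
    then show "x \<in> {\<bar>z\<bar><..}" using x by simp
  next
    fix r assume r: "r \<in> {\<bar>z\<bar><..}"
    then have r0: "0 < r" by (smt (verit) abs_ge_zero greaterThan_iff)
    have "\<bar>z\<bar>\<^sup>2 < r\<^sup>2" using r by (intro power_strict_mono) auto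
    then have zr: "z\<^sup>2 < r\<^sup>2" by simp
    show "r \<in> (\<lambda>y. sqrt (z\<^sup>2 + y\<^sup>2)) ` {0<..}"
    proof (rule image_eqI[where x="sqrt (r\<^sup>2 - z\<^sup>2)"])
      show "r = sqrt (z\<^sup>2 + (sqrt (r\<^sup>2 - z\<^sup>2))\<^sup>2)" using zr r0 by simp
      show "sqrt (r\<^sup>2 - z\<^sup>2) \<in> {0<..}" using zr by simp
    qed
  qed
qed (measurable)


lemma P4test:
  fixes g :: "real \<Rightarrow> real" and I :: real
  assumes g[measurable]: "g \<in> borel_measurable borel" and gnn: "\<And>u. 0 \<le> u \<Longrightarrow> 0 \<le> g u"
    and I: "0 < I"
  defines "pR \<equiv> \<lambda>r. indicator {0<..} r * ennreal (2 * r * g (r\<^sup>2) / I)"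
  defines "q \<equiv> \<lambda>r z. pR r * ennreal (1 / r) * pA (z / r)"
  shows "(\<integral>\<^sup>+r. q r z \<partial>lborel) = ennreal (1 / (pi * I)) * (\<integral>\<^sup>+y. ennreal (g (z\<^sup>2 + y\<^sup>2)) \<partial>lborel)"
proof -
  define Fz where "Fz r = ennreal (2 / (pi * I) * r * g (r\<^sup>2) / sqrt (r\<^sup>2 - z\<^sup>2))" for r
  have Fzm[measurable]: "Fz \<in> borel_measurable borel" unfolding Fz_def by measurable
  have "(\<integral>\<^sup>+r. q r z \<partial>lborel) = (\<integral>\<^sup>+r. Fz r * indicator {\<bar>z\<bar><..} r \<partial>lborel)"
  proof (rule nn_integral_cong)
    fix r :: real
    show "q r z = Fz r * indicator {\<bar>z\<bar><..} r"
    proof (cases "0 < r \<and> \<bar>z\<bar> < r")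
      case True
      then have r: "0 < r" and zr: "\<bar>z\<bar> < r" by auto
      have "\<bar>z\<bar>\<^sup>2 < r\<^sup>2" by (rule power_strict_mono) (use zr in auto)
      then have zr2: "z\<^sup>2 < r\<^sup>2" by simp
      have zr': "-1 < z / r" "z / r < 1" using zr r by (auto simp: field_simps abs_less_iff)
      define A where "A = sqrt (r\<^sup>2 - z\<^sup>2)"
      have pos: "0 < A" using zr2 by (simp add: A_def)
      have sq: "sqrt (1 - (z / r)\<^sup>2) = A / r"
      proof -
        have "1 - (z / r)\<^sup>2 = (r\<^sup>2 - z\<^sup>2) / r\<^sup>2" using r by (simp add: field_simps power2_eq_square)
        then show ?thesis using r by (simp add: real_sqrt_divide A_def)
      qed
      have gg: "0 \<le> g (r\<^sup>2)" by (rule gnn) simp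
      have i1: "indicator {0<..} r = (1::ennreal)" using r by simp
      have i2: "indicator {-1<..<1} (z / r) = (1::ennreal)" using zr' by simp
      have i3: "indicator {\<bar>z\<bar><..} r = (1::ennreal)" using zr by simp
      have h1: "0 \<le> 2 * r * g (r\<^sup>2) / I" using r gg I by simp
      have h2: "0 \<le> 1 / r" using r by simp
      have h3: "0 \<le> 1 / (pi * (A / r))" using r pos by simp
      have "q r z = ennreal (2 * r * g (r\<^sup>2) / I) * ennreal (1 / r) * ennreal (1 / (pi * (A / r)))"
        unfolding q_def pR_def pA_def i1 i2 sq by simp
      also have "\<dots> = ennreal (2 * r * g (r\<^sup>2) / I * (1 / r) * (1 / (pi * (A / r))))"
        unfolding ennreal_mult[OF h1 h2, symmetric] ennreal_mult[OF mult_nonneg_nonneg[OF h1 h2] h3, symmetric] ..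
      also have "2 * r * g (r\<^sup>2) / I * (1 / r) * (1 / (pi * (A / r))) = 2 / (pi * I) * r * g (r\<^sup>2) / A"
        using r I pos by (simp add: field_simps)
      finally show ?thesis unfolding i3 Fz_def A_def by simp
    next
      case False
      show ?thesis
      proof (cases "r \<le> 0")
        case True
        then have "indicator {0<..} r = (0::ennreal)" by simp
        moreover have "indicator {\<bar>z\<bar><..} r = (0::ennreal)"
        proof -
          have "\<not> \<bar>z\<bar> < r" using True abs_ge_zero[of z] by linarith
          then show ?thesis unfolding indicator_def by simp
        qed
        ultimately show ?thesis by (simp add: q_def pR_def)
      next
        case nr: False
        then have r: "0 < r" by simp
        have rz: "r \<le> \<bar>z\<bar>" using False r by auto
        have "\<bar>z / r\<bar> = \<bar>z\<bar> / r" using r by simp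
        moreover have "1 \<le> \<bar>z\<bar> / r" using r rz by simp
        ultimately have "\<not> \<bar>z / r\<bar> < 1" by linarith
        then have "\<not> (-1 < z / r \<and> z / r < 1)" by (auto simp only: abs_less_iff)
        then have "indicator {-1<..<1} (z / r) = (0::ennreal)" by simp
        then have "pA (z / r) = 0" by (simp add: pA_def)
        moreover have "indicator {\<bar>z\<bar><..} r = (0::ennreal)" using rz unfolding indicator_def by simp
        ultimately show ?thesis by (simp add: q_def)
      qed
    qed
  qed
  also have "\<dots> = (\<integral>\<^sup>+y. Fz (sqrt (z\<^sup>2 + y\<^sup>2)) * ennreal (y / sqrt (z\<^sup>2 + y\<^sup>2)) * indicator {0<..} y \<partial>lborel)"
    by (rule radial_subst[symmetric]) measurable
  also have "\<dots> = (\<integral>\<^sup>+y. ennreal (2 / (pi * I)) * (ennreal (g (z\<^sup>2 + y\<^sup>2)) * indicator {0<..} y) \<partial>lborel)"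
  proof (rule nn_integral_cong)
    fix y :: real
    show "Fz (sqrt (z\<^sup>2 + y\<^sup>2)) * ennreal (y / sqrt (z\<^sup>2 + y\<^sup>2)) * indicator {0<..} y =
          ennreal (2 / (pi * I)) * (ennreal (g (z\<^sup>2 + y\<^sup>2)) * indicator {0<..} y)"
    proof (cases "0 < y")
      case True
      define s where "s = sqrt (z\<^sup>2 + y\<^sup>2)"
      have p: "0 < z\<^sup>2 + y\<^sup>2" using True by (simp add: add_nonneg_pos)
      have s0: "0 < s" using p by (simp add: s_def)
      have s2: "s\<^sup>2 = z\<^sup>2 + y\<^sup>2" using p by (simp add: s_def)
      have sy: "sqrt (s\<^sup>2 - z\<^sup>2) = y" using True s2 by simp
      have gg: "0 \<le> g (z\<^sup>2 + y\<^sup>2)" by (rule gnn) simp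
      have "Fz s * ennreal (y / s) = ennreal (2 / (pi * I) * s * g (z\<^sup>2 + y\<^sup>2) / y * (y / s))"
        unfolding Fz_def sy s2 using True s0 gg I
        by (simp add: ennreal_mult''[symmetric] del: ennreal_mult'')
      also have "2 / (pi * I) * s * g (z\<^sup>2 + y\<^sup>2) / y * (y / s) = 2 / (pi * I) * g (z\<^sup>2 + y\<^sup>2)"
        using True s0 by (simp add: field_simps)
      also have "ennreal \<dots> = ennreal (2 / (pi * I)) * ennreal (g (z\<^sup>2 + y\<^sup>2))"
        using I gg by (simp add: ennreal_mult''[symmetric] del: ennreal_mult'')
      finally show ?thesis using True by (simp add: s_def)
    qed simp
  qed
  also have "\<dots> = ennreal (2 / (pi * I)) * (\<integral>\<^sup>+y. ennreal (g (z\<^sup>2 + y\<^sup>2)) * indicator {0<..} y \<partial>lborel)"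
    by (rule nn_integral_cmult) measurable
  also have "\<dots> = ennreal (1 / (pi * I)) * (\<integral>\<^sup>+y. ennreal (g (z\<^sup>2 + y\<^sup>2)) \<partial>lborel)"
  proof -
    have "(\<integral>\<^sup>+y. ennreal (g (z\<^sup>2 + y\<^sup>2)) \<partial>lborel) = 2 * (\<integral>\<^sup>+y. ennreal (g (z\<^sup>2 + y\<^sup>2)) * indicator {0<..} y \<partial>lborel)"
      by (rule nn_even_half) auto
    moreover have "ennreal (2 / (pi * I)) = ennreal (1 / (pi * I)) * 2"
      using I by (simp add: ennreal_mult''[symmetric] ennreal_numeral[symmetric] del: ennreal_numeral ennreal_mult'')
    ultimately show ?thesis by (simp add: mult.assoc)
  qed
  finally show ?thesis .
qed


lemma radial_mix:
  fixes g :: "real \<Rightarrow> real" and h :: "real \<Rightarrow> ennreal" and I :: real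
  assumes g[measurable]: "g \<in> borel_measurable borel" and gnn: "\<And>u. 0 \<le> u \<Longrightarrow> 0 \<le> g u"
    and I: "0 < I" and h[measurable]: "h \<in> borel_measurable borel"
  shows "(\<integral>\<^sup>+r. (indicator {0<..} r * ennreal (2 * r * g (r\<^sup>2) / I)) * (\<integral>\<^sup>+t. pA t * h (r * t) \<partial>lborel) \<partial>lborel)
       = (\<integral>\<^sup>+z. (ennreal (1 / (pi * I)) * (\<integral>\<^sup>+y. ennreal (g (z\<^sup>2 + y\<^sup>2)) \<partial>lborel)) * h z \<partial>lborel)"
proof -
  define pR where "pR r = indicator {0<..} r * ennreal (2 * r * g (r\<^sup>2) / I)" for r
  have pRm[measurable]: "pR \<in> borel_measurable borel" unfolding pR_def by measurable
  define q where "q r z = pR r * ennreal (1 / r) * pA (z / r)" for r z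
  have P1: "(\<integral>\<^sup>+t. pA t * h (r * t) \<partial>lborel) = (\<integral>\<^sup>+z. ennreal (1 / r) * pA (z / r) * h z \<partial>lborel)" if r: "0 < r" for r
  proof -
    have "(\<integral>\<^sup>+z. ennreal (1 / r) * pA (z / r) * h z \<partial>lborel) =
        ennreal \<bar>r\<bar> * (\<integral>\<^sup>+x. ennreal (1 / r) * pA ((0 + r * x) / r) * h (0 + r * x) \<partial>lborel)"
      by (rule nn_integral_real_affine) (use r in auto)
    also have "\<dots> = ennreal r * (\<integral>\<^sup>+x. ennreal (1 / r) * (pA x * h (r * x)) \<partial>lborel)"
      using r by (simp add: mult.assoc)
    also have "\<dots> = ennreal r * (ennreal (1 / r) * (\<integral>\<^sup>+x. pA x * h (r * x) \<partial>lborel))"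
      by (subst nn_integral_cmult) auto
    also have "\<dots> = (ennreal r * ennreal (1 / r)) * (\<integral>\<^sup>+x. pA x * h (r * x) \<partial>lborel)"
      by (simp add: mult.assoc)
    also have "ennreal r * ennreal (1 / r) = 1"
      using r by (simp add: ennreal_mult''[symmetric])
    finally show ?thesis by simp
  qed
  have P2: "(\<integral>\<^sup>+r. pR r * (\<integral>\<^sup>+t. pA t * h (r * t) \<partial>lborel) \<partial>lborel) =
            (\<integral>\<^sup>+r. (\<integral>\<^sup>+z. q r z * h z \<partial>lborel) \<partial>lborel)"
  proof (rule nn_integral_cong)
    fix r :: real
    show "pR r * (\<integral>\<^sup>+t. pA t * h (r * t) \<partial>lborel) = (\<integral>\<^sup>+z. q r z * h z \<partial>lborel)"
    proof (cases "0 < r")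
      case True
      then show ?thesis unfolding P1[OF True] q_def
        by (subst nn_integral_cmult[symmetric]) (auto simp: mult.assoc)
    next
      case False
      then show ?thesis by (simp add: q_def pR_def)
    qed
  qed
  have P3: "(\<integral>\<^sup>+r. (\<integral>\<^sup>+z. q r z * h z \<partial>lborel) \<partial>lborel) = (\<integral>\<^sup>+z. (\<integral>\<^sup>+r. q r z * h z \<partial>lborel) \<partial>lborel)"
    by (rule lborel_pair.Fubini'[symmetric]) (simp add: q_def, measurable)
  have P4: "(\<integral>\<^sup>+r. q r z \<partial>lborel) = ennreal (1 / (pi * I)) * (\<integral>\<^sup>+y. ennreal (g (z\<^sup>2 + y\<^sup>2)) \<partial>lborel)" for z
    using P4test[OF g gnn I] unfolding q_def pR_def .
  have "(\<integral>\<^sup>+r. pR r * (\<integral>\<^sup>+t. pA t * h (r * t) \<partial>lborel) \<partial>lborel) = (\<integral>\<^sup>+z. (\<integral>\<^sup>+r. q r z \<partial>lborel) * h z \<partial>lborel)"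
    unfolding P2 P3 by (rule nn_integral_cong) (rule nn_integral_multc, simp add: q_def, measurable)
  then show ?thesis unfolding P4 pR_def .
qed

lemma indep4_integral:
  fixes X :: "nat \<Rightarrow> 'a \<Rightarrow> real" and H :: "real \<Rightarrow> real \<Rightarrow> real \<Rightarrow> real \<Rightarrow> ennreal"
  assumes M: "prob_space M"
    and indep: "prob_space.indep_vars M (\<lambda>_. borel) X {0, 1, 2, 3}"
    and rv: "\<And>i. X i \<in> borel_measurable M"
    and Hm[measurable]: "(\<lambda>(a, b, c, d). H a b c d) \<in> borel_measurable borel"
  shows "(\<integral>\<^sup>+\<omega>. H (X 0 \<omega>) (X 1 \<omega>) (X 2 \<omega>) (X 3 \<omega>) \<partial>M) =
    (\<integral>\<^sup>+y0. (\<integral>\<^sup>+y1. (\<integral>\<^sup>+y2. (\<integral>\<^sup>+y3. H y0 y1 y2 y3 \<partial>distr M borel (X 3)) \<partial>distr M borel (X 2))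
       \<partial>distr M borel (X 1)) \<partial>distr M borel (X 0))"
proof -
  interpret prob_space M by (rule M)
  define N where "N i = distr M borel (X i)" for i
  have [measurable]: "X i \<in> borel_measurable M" for i by (rule rv)
  interpret P: product_sigma_finite N
    unfolding product_sigma_finite_def N_def
    by (auto intro!: prob_space_imp_sigma_finite prob_space_distr)
  have sN[simp]: "sets (N i) = sets borel" for i by (simp add: N_def)
  have Hm'[measurable]: "(\<lambda>x. H (f0 x) (f1 x) (f2 x) (f3 x)) \<in> borel_measurable K"
    if [measurable]: "f0 \<in> borel_measurable K" "f1 \<in> borel_measurable K" "f2 \<in> borel_measurable K" "f3 \<in> borel_measurable K"
    for f0 f1 f2 f3 and K :: "'b measure"
  proof -
    have "(\<lambda>x. (f0 x, f1 x, f2 x, f3 x)) \<in> measurable K borel"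
      unfolding borel_prod[symmetric] by measurable
    from measurable_compose[OF this Hm] show ?thesis by simp
  qed
  have comp[measurable]: "(\<lambda>x. x i) \<in> borel_measurable (PiM I N)" if "i \<in> I" for i I
  proof -
    have e: "measurable (PiM I N) (N i) = measurable (PiM I N) borel"
      by (rule measurable_cong_sets) simp_all
    show ?thesis using measurable_component_singleton[OF that, of N] unfolding e .
  qed
  have D: "distr M (\<Pi>\<^sub>M i\<in>{0,1,2,3}. borel) (\<lambda>x. \<lambda>i\<in>{0,1,2,3}. X i x) = (\<Pi>\<^sub>M i\<in>{0,1,2,3}. N i)"
    unfolding N_def using indep by (subst (asm) indep_vars_iff_distr_eq_PiM) auto
  have compb[measurable]: "(\<lambda>x. x i) \<in> borel_measurable (PiM I (\<lambda>_. borel))" if "i \<in> I" for i I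
    using measurable_component_singleton[OF that] .
  have "(\<integral>\<^sup>+\<omega>. H (X 0 \<omega>) (X 1 \<omega>) (X 2 \<omega>) (X 3 \<omega>) \<partial>M) =
      (\<integral>\<^sup>+x. H (x 0) (x 1) (x 2) (x 3) \<partial>distr M (\<Pi>\<^sub>M i\<in>{0,1,2,3}. borel) (\<lambda>x. \<lambda>i\<in>{0,1,2,3}. X i x))"
    by (subst nn_integral_distr) (simp_all, measurable)
  also have "\<dots> = (\<integral>\<^sup>+x. H (x 0) (x 1) (x 2) (x 3) \<partial>PiM (insert 0 {1,2,3}) N)"
    unfolding D by simp
  also have "\<dots> = (\<integral>\<^sup>+y0. (\<integral>\<^sup>+x. H y0 (x 1) (x 2) (x 3) \<partial>PiM (insert 1 {2,3}) N) \<partial>N 0)"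
    by (subst P.product_nn_integral_insert_rev) (simp_all, measurable)
  also have "\<dots> = (\<integral>\<^sup>+y0. (\<integral>\<^sup>+y1. (\<integral>\<^sup>+x. H y0 y1 (x 2) (x 3) \<partial>PiM (insert 2 {3}) N) \<partial>N 1) \<partial>N 0)"
    by (intro nn_integral_cong, subst P.product_nn_integral_insert_rev) (simp_all, measurable)
  also have "\<dots> = (\<integral>\<^sup>+y0. (\<integral>\<^sup>+y1. (\<integral>\<^sup>+y2. (\<integral>\<^sup>+x. H y0 y1 y2 (x 3) \<partial>PiM {3} N) \<partial>N 2) \<partial>N 1) \<partial>N 0)"
    by (intro nn_integral_cong, subst P.product_nn_integral_insert_rev) (simp_all, measurable)
  also have "\<dots> = (\<integral>\<^sup>+y0. (\<integral>\<^sup>+y1. (\<integral>\<^sup>+y2. (\<integral>\<^sup>+y3. H y0 y1 y2 y3 \<partial>N 3) \<partial>N 2) \<partial>N 1) \<partial>N 0)"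
  proof (intro nn_integral_cong)
    fix y0 y1 y2
    have e: "measurable (N 3) borel = measurable borel borel"
      by (rule measurable_cong_sets) simp_all
    have "(\<lambda>y. H y0 y1 y2 y) \<in> borel_measurable (N 3)" unfolding e by measurable
    then show "(\<integral>\<^sup>+x. H y0 y1 y2 (x 3) \<partial>PiM {3} N) = (\<integral>\<^sup>+y3. H y0 y1 y2 y3 \<partial>N 3)"
      by (rule P.product_nn_integral_singleton)
  qed
  finally show ?thesis unfolding N_def .
qed

lemma two_point_integral:
  fixes U :: "'a \<Rightarrow> real" and \<phi> :: "real \<Rightarrow> ennreal"
  assumes M: "prob_space M" and U[measurable]: "U \<in> borel_measurable M"
    and m1: "measure M {\<omega>\<in>space M. U \<omega> = -1} = 1/2"
    and p1: "measure M {\<omega>\<in>space M. U \<omega> = 1} = 1/2"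
  shows "(\<integral>\<^sup>+y. \<phi> y \<partial>distr M borel U) = ennreal (1/2) * \<phi> (-1) + ennreal (1/2) * \<phi> 1"
proof -
  interpret prob_space M by (rule M)
  let ?A = "{\<omega>\<in>space M. U \<omega> = -1}" and ?B = "{\<omega>\<in>space M. U \<omega> = 1}"
  have AB: "?A \<in> events" "?B \<in> events" by measurable
  have "prob (?A \<union> ?B) = prob ?A + prob ?B"
    by (rule finite_measure_Union) (use AB in auto)
  moreover have "?A \<union> ?B = {\<omega>\<in>space M. U \<omega> \<in> {-1, 1}}" by auto
  ultimately have pr: "prob {\<omega>\<in>space M. U \<omega> \<in> {-1, 1}} = 1"
    using m1 p1 by simp
  have ev: "{\<omega>\<in>space M. U \<omega> \<in> {-1, 1}} \<in> events" by measurable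
  have "AE \<omega> in M. \<omega> \<in> {\<omega>\<in>space M. U \<omega> \<in> {-1, 1}}"
    using AE_in_set_eq_1[OF ev] pr by simp
  then have "AE \<omega> in M. U \<omega> \<in> {-1, 1}" by eventually_elim auto
  then have ae: "AE y in distr M borel U. y \<in> {-1, 1}"
    by (subst AE_distr_iff) auto
  have "(\<integral>\<^sup>+y. \<phi> y \<partial>distr M borel U) = (\<integral>\<^sup>+y. \<phi> (-1) * indicator {-1} y + \<phi> 1 * indicator {1} y \<partial>distr M borel U)"
    by (rule nn_integral_cong_AE) (use ae in eventually_elim, auto)
  also have "\<dots> = \<phi> (-1) * emeasure (distr M borel U) {-1} + \<phi> 1 * emeasure (distr M borel U) {1}"
    by (subst nn_integral_add) (auto simp: nn_integral_cmult_indicator)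
  also have "emeasure (distr M borel U) {-1} = ennreal (1/2)"
  proof -
    have "U -` {-1} \<inter> space M = {\<omega>\<in>space M. U \<omega> = -1}" by auto
    then have "emeasure (distr M borel U) {-1} = emeasure M {\<omega>\<in>space M. U \<omega> = -1}"
      by (subst emeasure_distr) auto
    also have "\<dots> = ennreal (1/2)" unfolding emeasure_eq_measure m1 ..
    finally show ?thesis .
  qed
  also have "emeasure (distr M borel U) {1} = ennreal (1/2)"
  proof -
    have "U -` {1} \<inter> space M = {\<omega>\<in>space M. U \<omega> = 1}" by auto
    then have "emeasure (distr M borel U) {1} = emeasure M {\<omega>\<in>space M. U \<omega> = 1}"
      by (subst emeasure_distr) auto
    also have "\<dots> = ennreal (1/2)" unfolding emeasure_eq_measure p1 ..
    finally show ?thesis .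
  qed
  finally show ?thesis by (simp add: mult.commute)
qed

lemma quad_nonneg:
  fixes rho x y :: real
  assumes "-1 < rho" "rho < 1"
  shows "0 \<le> (x\<^sup>2 - 2 * rho * x * y + y\<^sup>2) / (1 - rho\<^sup>2)"
proof -
  have "x\<^sup>2 - 2 * rho * x * y + y\<^sup>2 = (x - rho * y)\<^sup>2 + (1 - rho\<^sup>2) * y\<^sup>2"
    by (simp add: power2_eq_square algebra_simps)
  moreover have "0 < 1 - rho\<^sup>2"
  proof -
    have "\<bar>rho\<bar> < 1" using assms by auto
    then have "rho\<^sup>2 < 1" by (simp add: abs_square_less_1)
    then show ?thesis by simp
  qed
  ultimately show ?thesis by (simp add: add_nonneg_nonneg)
qed

lemma quad_id:
  fixes rho b c y :: real
  assumes c: "c\<^sup>2 = (1 + rho) / 2" and rho: "-1 < rho" "rho < 1"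
  shows "((- b / 2 + c * y + b)\<^sup>2 - 2 * rho * (- b / 2 + c * y + b) * (- b / 2 + c * y) + (- b / 2 + c * y)\<^sup>2) / (1 - rho\<^sup>2)
       = y\<^sup>2 + b\<^sup>2 / (2 * (1 - rho))"
proof -
  have N: "(- b / 2 + c * y + b)\<^sup>2 - 2 * rho * (- b / 2 + c * y + b) * (- b / 2 + c * y) + (- b / 2 + c * y)\<^sup>2
      = 2 * c\<^sup>2 * y\<^sup>2 * (1 - rho) + b\<^sup>2 * (1 + rho) / 2"
    by (simp add: power2_eq_square field_simps)
  have p1: "0 < 1 - rho" "0 < 1 + rho" using rho by auto
  have r2: "1 - rho\<^sup>2 = (1 - rho) * (1 + rho)" by (simp add: power2_eq_square algebra_simps)
  have N2: "2 * c\<^sup>2 * y\<^sup>2 * (1 - rho) + b\<^sup>2 * (1 + rho) / 2 = (1 - rho) * (1 + rho) * y\<^sup>2 + b\<^sup>2 * (1 + rho) / 2"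
    unfolding c by (simp add: field_simps)
  have "((1 - rho) * (1 + rho) * y\<^sup>2 + b\<^sup>2 * (1 + rho) / 2) / ((1 - rho) * (1 + rho)) = y\<^sup>2 + b\<^sup>2 / (2 * (1 - rho))"
  proof -
    have gen: "\<And>P Q. 0 < P \<Longrightarrow> 0 < Q \<Longrightarrow> (P * Q * y\<^sup>2 + b\<^sup>2 * Q / 2) / (P * Q) = y\<^sup>2 + b\<^sup>2 / (2 * P)"
      by (simp add: field_simps)
    show ?thesis by (rule gen[OF p1])
  qed
  then show ?thesis unfolding N N2 r2 .
qed


lemma uls_pdf_eq:
  fixes g :: "real \<Rightarrow> real" and mu sig rho w :: real
  assumes g[measurable]: "g \<in> borel_measurable borel" and gnn: "\<And>u. 0 \<le> u \<Longrightarrow> 0 \<le> g u"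
    and Z: "0 < Zg g" and sig: "0 < sig" and rho: "-1 < rho" "rho < 1" and w: "0 < w" "w < 1"
  shows "uls_pdf mu sig rho g w = ennreal (1 / (w * (1 - w) * (sig * sqrt (2 * (1 - rho))))) *
           (ennreal (1 / Zg g) * (\<integral>\<^sup>+y. ennreal (g ((A_map (sig * sqrt (2 * (1 - rho))) w)\<^sup>2 + y\<^sup>2)) \<partial>lborel))"
proof -
  define a where "a = ln (w / (1 - w))"
  define b where "b = a / sig"
  define sr where "sr = sig * sqrt (2 * (1 - rho))"
  define c where "c = sqrt ((1 + rho) / 2)"
  define Qf where "Qf x y = (x\<^sup>2 - 2 * rho * x * y + y\<^sup>2) / (1 - rho\<^sup>2)" for x y :: real
  define F where "F t = ennreal ((1 / t) * g (Qf ((1 / sig) * ln (w / (1 - w) * t / exp mu)) ((1 / sig) * ln (t / exp mu))))" for t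
  define J where "J = (\<integral>\<^sup>+y. ennreal (g ((A_map sr w)\<^sup>2 + y\<^sup>2)) \<partial>lborel)"
  have Qnn: "0 \<le> Qf x y" for x y unfolding Qf_def by (rule quad_nonneg[OF rho])
  have Fm[measurable]: "F \<in> borel_measurable borel" unfolding F_def Qf_def by measurable
  have wq: "0 < w / (1 - w)" using w by simp
  have inner: "(\<integral>\<^sup>+t. indicator {0<..} t * ennreal ((1 / t) *
            (let eta = exp mu; tw = w / (1 - w) * t; ttw = (1 / sig) * ln (tw / eta); tt = (1 / sig) * ln (t / eta)
             in g ((ttw\<^sup>2 - 2 * rho * ttw * tt + tt\<^sup>2) / (1 - rho\<^sup>2)))) \<partial>lborel)
      = (\<integral>\<^sup>+t. F t * indicator {0<..} t \<partial>lborel)"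
    by (auto simp: F_def Qf_def Let_def mult.commute intro!: nn_integral_cong)
  have sub: "(\<integral>\<^sup>+v. F (exp mu * exp (sig * v)) * ennreal (sig * (exp mu * exp (sig * v))) * indicator UNIV v \<partial>lborel)
      = (\<integral>\<^sup>+t. F t * indicator {0<..} t \<partial>lborel)"
  proof (rule nn_subst_open[where l="\<lambda>n. - real n - 1" and u="\<lambda>n. real n + 1"])
    show "decseq (\<lambda>n. - real n - 1)" by (auto simp: decseq_def)
    show "incseq (\<lambda>n. real n + 1)" by (auto simp: incseq_def)
    show "- real n - 1 < real n + 1" for n by simp
    show "UNIV = (\<Union>n. {- real n - 1..real n + 1})"
    proof (intro equalityI subsetI)
      fix v :: real
      obtain n :: nat where "\<bar>v\<bar> < real n" using reals_Archimedean2 by blast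
      then show "v \<in> (\<Union>n. {- real n - 1..real n + 1})" by (auto intro!: exI[of _ n])
    qed simp
    show "((\<lambda>v. exp mu * exp (sig * v)) has_real_derivative sig * (exp mu * exp (sig * v))) (at v)" for v
      by (auto intro!: derivative_eq_intros)
    show "continuous_on UNIV (\<lambda>v. sig * (exp mu * exp (sig * v)))" by (intro continuous_intros)
    show "0 \<le> sig * (exp mu * exp (sig * v))" for v using sig by simp
    show "(\<lambda>v. exp mu * exp (sig * v)) ` UNIV = {0<..}"
    proof (intro equalityI subsetI)
      fix t :: real assume t: "t \<in> {0<..}"
      show "t \<in> (\<lambda>v. exp mu * exp (sig * v)) ` UNIV"
      proof (rule image_eqI[where x="(ln t - mu) / sig"])
        show "t = exp mu * exp (sig * ((ln t - mu) / sig))"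
          using t sig by (simp add: exp_add[symmetric] exp_diff)
      qed simp
    qed auto
  qed (measurable)
  have pt: "F (exp mu * exp (sig * v)) * ennreal (sig * (exp mu * exp (sig * v))) * indicator UNIV v
          = ennreal sig * ennreal (g (Qf (v + b) v))" for v
  proof -
    define t where "t = exp mu * exp (sig * v)"
    have t0: "0 < t" by (simp add: t_def)
    have l1: "ln (t / exp mu) = sig * v" by (simp add: t_def)
    have l2: "ln (w / (1 - w) * t / exp mu) = a + sig * v"
      using wq t0 w by (simp add: a_def ln_mult ln_div t_def)
    have e1: "(1 / sig) * ln (w / (1 - w) * t / exp mu) = v + b"
      unfolding l2 b_def using sig by (simp add: field_simps)
    have e2: "(1 / sig) * ln (t / exp mu) = v" unfolding l1 using sig by simp
    have gq: "0 \<le> g (Qf (v + b) v)" by (rule gnn[OF Qnn])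
    have "F t * ennreal (sig * t) = ennreal ((1 / t) * g (Qf (v + b) v) * (sig * t))"
      unfolding F_def e1 e2 using t0 gq sig by (simp add: ennreal_mult''[symmetric] del: ennreal_mult'')
    also have "(1 / t) * g (Qf (v + b) v) * (sig * t) = sig * g (Qf (v + b) v)" using t0 by (simp add: field_simps)
    also have "ennreal (sig * g (Qf (v + b) v)) = ennreal sig * ennreal (g (Qf (v + b) v))"
      using sig gq by (simp add: ennreal_mult)
    finally show ?thesis by (simp add: t_def)
  qed
  have c2: "c\<^sup>2 = (1 + rho) / 2" using rho by (simp add: c_def)
  have c0: "0 < c" using rho by (simp add: c_def)
  have sr2: "sr\<^sup>2 = sig\<^sup>2 * (2 * (1 - rho))" using rho by (simp add: sr_def power_mult_distrib)
  have Ax: "(A_map sr w)\<^sup>2 = b\<^sup>2 / (2 * (1 - rho))"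
    unfolding A_map_def b_def a_def[symmetric] using sr2 sig rho by (simp add: power_divide field_simps power2_eq_square)
  have aff: "(\<integral>\<^sup>+v. ennreal (g (Qf (v + b) v)) \<partial>lborel) = ennreal c * J"
  proof -
    have "(\<integral>\<^sup>+v. ennreal (g (Qf (v + b) v)) \<partial>lborel) =
        ennreal \<bar>c\<bar> * (\<integral>\<^sup>+y. ennreal (g (Qf ((- b / 2 + c * y) + b) (- b / 2 + c * y))) \<partial>lborel)"
      by (rule nn_integral_real_affine) (use c0 in \<open>auto simp: Qf_def\<close>)
    also have "(\<integral>\<^sup>+y. ennreal (g (Qf ((- b / 2 + c * y) + b) (- b / 2 + c * y))) \<partial>lborel) = J"
      unfolding J_def
    proof (rule nn_integral_cong)
      fix y :: real
      have "Qf ((- b / 2 + c * y) + b) (- b / 2 + c * y) = y\<^sup>2 + b\<^sup>2 / (2 * (1 - rho))"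
        unfolding Qf_def by (rule quad_id[OF c2 rho])
      then show "ennreal (g (Qf ((- b / 2 + c * y) + b) (- b / 2 + c * y))) = ennreal (g ((A_map sr w)\<^sup>2 + y\<^sup>2))"
        unfolding Ax by (simp add: add.commute)
    qed
    finally show ?thesis using c0 by simp
  qed
  have "uls_pdf mu sig rho g w = ennreal (1 / (w * (1 - w) * sig\<^sup>2 * sqrt (1 - rho\<^sup>2) * Zg g)) *
       (\<integral>\<^sup>+t. F t * indicator {0<..} t \<partial>lborel)"
    unfolding uls_pdf_def inner using w by simp
  also have "(\<integral>\<^sup>+t. F t * indicator {0<..} t \<partial>lborel) = ennreal sig * (ennreal c * J)"
  proof -
    have Qm: "(\<lambda>v. ennreal (g (Qf (v + b) v))) \<in> borel_measurable lborel" unfolding Qf_def by measurable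
    show ?thesis unfolding sub[symmetric] pt by (simp only: nn_integral_cmult[OF Qm] aff)
  qed
  also have "ennreal (1 / (w * (1 - w) * sig\<^sup>2 * sqrt (1 - rho\<^sup>2) * Zg g)) * (ennreal sig * (ennreal c * J))
      = ennreal (1 / (w * (1 - w) * sr)) * (ennreal (1 / Zg g) * J)"
  proof -
    have sq: "c * sqrt (2 * (1 - rho)) = sqrt (1 - rho\<^sup>2)"
      unfolding c_def real_sqrt_mult[symmetric] by (simp add: power2_eq_square field_simps)
    have s1: "0 < sqrt (1 - rho\<^sup>2)" "0 < sqrt (2 * (1 - rho))" using rho sq c0
      by (auto simp: abs_square_less_1)
    have "1 / (w * (1 - w) * sig\<^sup>2 * sqrt (1 - rho\<^sup>2) * Zg g) * (sig * c) = 1 / (w * (1 - w) * sr) * (1 / Zg g)"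
      unfolding sr_def sq[symmetric] using w sig Z c0 s1 by (simp add: field_simps power2_eq_square)
    moreover have "0 \<le> 1 / (w * (1 - w) * sig\<^sup>2 * sqrt (1 - rho\<^sup>2) * Zg g)" using w Z s1 by simp
    moreover have "0 \<le> 1 / (w * (1 - w) * sr)" "0 \<le> 1 / Zg g" using w Z s1 sig by (simp_all add: sr_def)
    ultimately show ?thesis using sig c0
      by (simp add: ennreal_mult[symmetric] mult.assoc[symmetric] del: ennreal_mult'')
  qed
  finally show ?thesis unfolding J_def sr_def .
qed

lemma alpha_facts:
  fixes rho :: real
  assumes rho: "-1 < rho" "rho < 1"
  defines "x0 \<equiv> (1 - rho) / sqrt (2 * (1 - rho))"
  shows "0 < arccos x0" "arccos x0 < pi/2" "cos (arccos x0) = (1 - rho) / sqrt (2 * (1 - rho))"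
    "sin (arccos x0) = sqrt (1 - rho\<^sup>2) / sqrt (2 * (1 - rho))"
proof -
  have p: "0 < 1 - rho" "0 < 1 + rho" using rho by auto
  have x0: "x0 = sqrt ((1 - rho) / 2)"
  proof -
    have "sqrt ((1 - rho) / 2) * sqrt (2 * (1 - rho)) = 1 - rho"
    proof -
      have "(1 - rho) / 2 * (2 * (1 - rho)) = (1 - rho)\<^sup>2" by (simp add: power2_eq_square field_simps)
      then show ?thesis unfolding real_sqrt_mult[symmetric] using p by simp
    qed
    then show ?thesis unfolding x0_def using p by (simp add: field_simps)
  qed
  have x00: "0 < x0" using p by (simp add: x0)
  have x01: "x0 < 1" using p rho by (simp add: x0 real_sqrt_less_iff)
  have x0sq: "x0\<^sup>2 = (1 - rho) / 2" using p by (simp add: x0)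
  show "0 < arccos x0" using arccos_lt_bounded[of x0] x00 x01 by auto
  show "arccos x0 < pi/2" using arccos_less_arccos[of 0 x0] x00 x01 by simp
  have "cos (arccos x0) = x0" using x00 x01 by simp
  then show "cos (arccos x0) = (1 - rho) / sqrt (2 * (1 - rho))" unfolding x0_def .
  have "sin (arccos x0) = sqrt (1 - x0\<^sup>2)" using x00 x01 by (intro sin_arccos) auto
  also have "1 - x0\<^sup>2 = (1 - rho\<^sup>2) / (2 * (1 - rho))"
    unfolding x0sq using p by (simp add: field_simps power2_eq_square)
  also have "sqrt \<dots> = sqrt (1 - rho\<^sup>2) / sqrt (2 * (1 - rho))" by (simp add: real_sqrt_divide)
  finally show "sin (arccos x0) = sqrt (1 - rho\<^sup>2) / sqrt (2 * (1 - rho))" .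
qed

lemma distr_borel_lborel: "distr M borel f = distr M lborel f"
  by (rule distr_cong) auto

lemma density_integral:
  fixes X :: "'a \<Rightarrow> real" and p \<phi> :: "real \<Rightarrow> ennreal"
  assumes "distributed M lborel X p" and [measurable]: "\<phi> \<in> borel_measurable borel"
  shows "(\<integral>\<^sup>+y. \<phi> y \<partial>distr M borel X) = (\<integral>\<^sup>+y. p y * \<phi> y \<partial>lborel)"
proof -
  have d: "distr M lborel X = density lborel p" and pm: "p \<in> borel_measurable lborel"
    using assms(1) by (auto simp: distributed_def)
  show ?thesis unfolding distr_borel_lborel d using pm by (subst nn_integral_density) auto
qed


lemma quarter:
  fixes a b c d :: ennreal
  shows "ennreal (1/2) * (ennreal (1/2) * a + ennreal (1/2) * b) + ennreal (1/2) * (ennreal (1/2) * c + ennreal (1/2) * d)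
    = ennreal (1/4) * (d + c + b + a)"
proof -
  have q: "ennreal (1/2) * ennreal (1/2) = ennreal (1/4)"
  proof -
    have "ennreal (1/2) * ennreal (1/2) = ennreal (1/2 * (1/2))" by (rule ennreal_mult[symmetric]) auto
    also have "1/2 * (1/2) = (1/4::real)" by simp
    finally show ?thesis .
  qed
  have "ennreal (1/2) * (ennreal (1/2) * a + ennreal (1/2) * b) + ennreal (1/2) * (ennreal (1/2) * c + ennreal (1/2) * d)
      = (ennreal (1/2) * ennreal (1/2)) * a + (ennreal (1/2) * ennreal (1/2)) * b
        + ((ennreal (1/2) * ennreal (1/2)) * c + (ennreal (1/2) * ennreal (1/2)) * d)"
    by (simp only: distrib_left mult.assoc)
  also have "\<dots> = ennreal (1/4) * (d + c + b + a)"
    unfolding q by (simp only: distrib_left add_ac)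
  finally show ?thesis .
qed

lemma zrho_key:
  fixes M :: "'a measure" and g :: "real \<Rightarrow> real" and rho :: real
    and U1 U2 R D :: "'a \<Rightarrow> real" and h :: "real \<Rightarrow> ennreal"
  assumes gm[measurable]: "g \<in> borel_measurable borel" and gnn: "\<And>u. 0 \<le> u \<Longrightarrow> 0 \<le> g u"
    and I: "0 < (LINT u:{0..}|lborel. g u)"
    and rho: "-1 < rho" "rho < 1"
    and M: "prob_space M"
    and indep: "prob_space.indep_vars M (\<lambda>_. borel)
                  (\<lambda>i::nat. if i = 0 then U1 else if i = 1 then U2 else if i = 2 then R else D)
                  {0, 1, 2, 3}"
    and U1: "U1 \<in> borel_measurable M" "measure M {\<omega>\<in>space M. U1 \<omega> = -1} = 1/2"
            "measure M {\<omega>\<in>space M. U1 \<omega> = 1} = 1/2"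
    and U2: "U2 \<in> borel_measurable M" "measure M {\<omega>\<in>space M. U2 \<omega> = -1} = 1/2"
            "measure M {\<omega>\<in>space M. U2 \<omega> = 1} = 1/2"
    and D: "distributed M lborel D (\<lambda>d. indicator {0<..<1} d * ennreal (2 / (pi * sqrt (1 - d\<^sup>2))))"
    and R: "distributed M lborel R
              (\<lambda>r. indicator {0<..} r * ennreal (2 * r * g (r\<^sup>2) / (LINT u:{0..}|lborel. g u)))"
    and hm[measurable]: "h \<in> borel_measurable borel"
  shows "(\<integral>\<^sup>+\<omega>. h ((1 / sqrt (2 * (1 - rho))) * ((1 - rho) * (R \<omega> * D \<omega> * U1 \<omega>)
              - sqrt (1 - rho\<^sup>2) * (R \<omega> * sqrt (1 - (D \<omega>)\<^sup>2) * U2 \<omega>))) \<partial>M)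
       = (\<integral>\<^sup>+z. (ennreal (1 / (pi * (LINT u:{0..}|lborel. g u))) * (\<integral>\<^sup>+y. ennreal (g (z\<^sup>2 + y\<^sup>2)) \<partial>lborel)) * h z \<partial>lborel)"
proof -
  define Ig where "Ig = (LINT u:{0..}|lborel. g u)"
  define X where "X = (\<lambda>i::nat. if i = 0 then U1 else if i = 1 then U2 else if i = 2 then R else D)"
  define \<alpha> where "\<alpha> = arccos ((1 - rho) / sqrt (2 * (1 - rho)))"
  note af = alpha_facts[OF rho, folded \<alpha>_def]
  define Tf where "Tf = (\<lambda>u1 u2 d. cos \<alpha> * d * u1 - sin \<alpha> * sqrt (1 - d\<^sup>2) * u2)"
  define H where "H = (\<lambda>a b c d. h (c * Tf a b d))"
  define pR where "pR r = indicator {0<..} r * ennreal (2 * r * g (r\<^sup>2) / Ig)" for r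
  have Rd: "distributed M lborel R pR" using R unfolding pR_def Ig_def .
  have Dd: "distributed M lborel D pD" using D unfolding pD_def[abs_def] .
  have Rm[measurable]: "R \<in> borel_measurable M" using Rd by (auto simp: distributed_def)
  have Dm[measurable]: "D \<in> borel_measurable M" using Dd by (auto simp: distributed_def)
  have pRm[measurable]: "pR \<in> borel_measurable borel" unfolding pR_def by measurable
  have Tfm[measurable]: "(\<lambda>x. Tf (f0 x) (f1 x) (f2 x)) \<in> borel_measurable K"
    if [measurable]: "f0 \<in> borel_measurable K" "f1 \<in> borel_measurable K" "f2 \<in> borel_measurable K" for f0 f1 f2 and K :: "'b measure"
    unfolding Tf_def by measurable
  have Hm: "(\<lambda>(a, b, c, d). H a b c d) \<in> borel_measurable borel"
    unfolding H_def borel_prod[symmetric] by measurable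
  have Zeq: "(1 / sqrt (2 * (1 - rho))) * ((1 - rho) * (R \<omega> * D \<omega> * U1 \<omega>)
              - sqrt (1 - rho\<^sup>2) * (R \<omega> * sqrt (1 - (D \<omega>)\<^sup>2) * U2 \<omega>)) = R \<omega> * Tf (U1 \<omega>) (U2 \<omega>) (D \<omega>)" for \<omega>
    unfolding Tf_def af(3) af(4) by (simp add: divide_inverse algebra_simps)
  have rv: "X i \<in> borel_measurable M" for i unfolding X_def using U1(1) U2(1) by auto
  have "(\<integral>\<^sup>+\<omega>. h ((1 / sqrt (2 * (1 - rho))) * ((1 - rho) * (R \<omega> * D \<omega> * U1 \<omega>)
              - sqrt (1 - rho\<^sup>2) * (R \<omega> * sqrt (1 - (D \<omega>)\<^sup>2) * U2 \<omega>))) \<partial>M)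
      = (\<integral>\<^sup>+\<omega>. H (X 0 \<omega>) (X 1 \<omega>) (X 2 \<omega>) (X 3 \<omega>) \<partial>M)"
    unfolding Zeq H_def X_def by simp
  also have "\<dots> = (\<integral>\<^sup>+y0. (\<integral>\<^sup>+y1. (\<integral>\<^sup>+y2. (\<integral>\<^sup>+y3. H y0 y1 y2 y3 \<partial>distr M borel (X 3)) \<partial>distr M borel (X 2))
       \<partial>distr M borel (X 1)) \<partial>distr M borel (X 0))"
    by (rule indep4_integral[OF M _ rv Hm]) (use indep in \<open>simp add: X_def\<close>)
  also have "\<dots> = (\<integral>\<^sup>+y0. (\<integral>\<^sup>+y1. (\<integral>\<^sup>+r. pR r * (\<integral>\<^sup>+d. pD d * H y0 y1 r d \<partial>lborel) \<partial>lborel)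
       \<partial>distr M borel U2) \<partial>distr M borel U1)"
  proof -
    have inner: "(\<integral>\<^sup>+y2. (\<integral>\<^sup>+y3. H y0 y1 y2 y3 \<partial>distr M borel D) \<partial>distr M borel R)
        = (\<integral>\<^sup>+r. pR r * (\<integral>\<^sup>+d. pD d * H y0 y1 r d \<partial>lborel) \<partial>lborel)" for y0 y1
    proof -
      have "(\<integral>\<^sup>+y2. (\<integral>\<^sup>+y3. H y0 y1 y2 y3 \<partial>distr M borel D) \<partial>distr M borel R)
          = (\<integral>\<^sup>+y2. (\<integral>\<^sup>+d. pD d * H y0 y1 y2 d \<partial>lborel) \<partial>distr M borel R)"
        by (intro nn_integral_cong density_integral[OF Dd]) (simp add: H_def, measurable)
      also have "\<dots> = (\<integral>\<^sup>+r. pR r * (\<integral>\<^sup>+d. pD d * H y0 y1 r d \<partial>lborel) \<partial>lborel)"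
        by (rule density_integral[OF Rd]) (simp add: H_def, measurable)
      finally show ?thesis .
    qed
    show ?thesis unfolding X_def by (simp add: inner)
  qed
  also have "\<dots> = ennreal (1/4) * ((\<integral>\<^sup>+r. pR r * (\<integral>\<^sup>+d. pD d * H 1 1 r d \<partial>lborel) \<partial>lborel)
       + (\<integral>\<^sup>+r. pR r * (\<integral>\<^sup>+d. pD d * H 1 (-1) r d \<partial>lborel) \<partial>lborel)
       + (\<integral>\<^sup>+r. pR r * (\<integral>\<^sup>+d. pD d * H (-1) 1 r d \<partial>lborel) \<partial>lborel)
       + (\<integral>\<^sup>+r. pR r * (\<integral>\<^sup>+d. pD d * H (-1) (-1) r d \<partial>lborel) \<partial>lborel))"
    unfolding two_point_integral[OF M U1] two_point_integral[OF M U2] by (rule quarter)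
  also have "\<dots> = ennreal (1/4) * (\<integral>\<^sup>+r. pR r * ((\<integral>\<^sup>+d. pD d * H 1 1 r d \<partial>lborel)
       + (\<integral>\<^sup>+d. pD d * H 1 (-1) r d \<partial>lborel) + (\<integral>\<^sup>+d. pD d * H (-1) 1 r d \<partial>lborel)
       + (\<integral>\<^sup>+d. pD d * H (-1) (-1) r d \<partial>lborel)) \<partial>lborel)"
  proof -
    have m: "(\<lambda>r. pR r * (\<integral>\<^sup>+d. pD d * H a b r d \<partial>lborel)) \<in> borel_measurable lborel" for a b
      unfolding H_def by measurable
    have "(\<integral>\<^sup>+r. pR r * ((\<integral>\<^sup>+d. pD d * H 1 1 r d \<partial>lborel)
       + (\<integral>\<^sup>+d. pD d * H 1 (-1) r d \<partial>lborel) + (\<integral>\<^sup>+d. pD d * H (-1) 1 r d \<partial>lborel)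
       + (\<integral>\<^sup>+d. pD d * H (-1) (-1) r d \<partial>lborel)) \<partial>lborel)
      = (\<integral>\<^sup>+r. (pR r * (\<integral>\<^sup>+d. pD d * H 1 1 r d \<partial>lborel)
       + pR r * (\<integral>\<^sup>+d. pD d * H 1 (-1) r d \<partial>lborel) + pR r * (\<integral>\<^sup>+d. pD d * H (-1) 1 r d \<partial>lborel))
       + pR r * (\<integral>\<^sup>+d. pD d * H (-1) (-1) r d \<partial>lborel) \<partial>lborel)"
      by (simp only: distrib_left)
    also have "\<dots> = (\<integral>\<^sup>+r. pR r * (\<integral>\<^sup>+d. pD d * H 1 1 r d \<partial>lborel)
       + pR r * (\<integral>\<^sup>+d. pD d * H 1 (-1) r d \<partial>lborel) + pR r * (\<integral>\<^sup>+d. pD d * H (-1) 1 r d \<partial>lborel) \<partial>lborel)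
       + (\<integral>\<^sup>+r. pR r * (\<integral>\<^sup>+d. pD d * H (-1) (-1) r d \<partial>lborel) \<partial>lborel)"
      by (rule nn_integral_add) (intro borel_measurable_add m)+
    also have "(\<integral>\<^sup>+r. pR r * (\<integral>\<^sup>+d. pD d * H 1 1 r d \<partial>lborel)
       + pR r * (\<integral>\<^sup>+d. pD d * H 1 (-1) r d \<partial>lborel) + pR r * (\<integral>\<^sup>+d. pD d * H (-1) 1 r d \<partial>lborel) \<partial>lborel)
      = (\<integral>\<^sup>+r. pR r * (\<integral>\<^sup>+d. pD d * H 1 1 r d \<partial>lborel)
       + pR r * (\<integral>\<^sup>+d. pD d * H 1 (-1) r d \<partial>lborel) \<partial>lborel) + (\<integral>\<^sup>+r. pR r * (\<integral>\<^sup>+d. pD d * H (-1) 1 r d \<partial>lborel) \<partial>lborel)"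
      by (rule nn_integral_add) (intro borel_measurable_add m)+
    also have "(\<integral>\<^sup>+r. pR r * (\<integral>\<^sup>+d. pD d * H 1 1 r d \<partial>lborel)
       + pR r * (\<integral>\<^sup>+d. pD d * H 1 (-1) r d \<partial>lborel) \<partial>lborel)
      = (\<integral>\<^sup>+r. pR r * (\<integral>\<^sup>+d. pD d * H 1 1 r d \<partial>lborel) \<partial>lborel)
       + (\<integral>\<^sup>+r. pR r * (\<integral>\<^sup>+d. pD d * H 1 (-1) r d \<partial>lborel) \<partial>lborel)"
      by (rule nn_integral_add) (intro m)+
    finally show ?thesis by simp
  qed
  also have "\<dots> = ennreal (1/4) * (\<integral>\<^sup>+r. pR r * (4 * (\<integral>\<^sup>+t. pA t * h (r * t) \<partial>lborel)) \<partial>lborel)"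
  proof -
    have "(\<integral>\<^sup>+d. pD d * H 1 1 r d \<partial>lborel)
       + (\<integral>\<^sup>+d. pD d * H 1 (-1) r d \<partial>lborel) + (\<integral>\<^sup>+d. pD d * H (-1) 1 r d \<partial>lborel)
       + (\<integral>\<^sup>+d. pD d * H (-1) (-1) r d \<partial>lborel) = 4 * (\<integral>\<^sup>+t. pA t * h (r * t) \<partial>lborel)" for r
      unfolding H_def Tf_def by (rule arcsine_mix[of "\<lambda>t. h (r * t)" \<alpha>]) (use af in auto)
    then show ?thesis by simp
  qed
  also have "\<dots> = (\<integral>\<^sup>+r. pR r * (\<integral>\<^sup>+t. pA t * h (r * t) \<partial>lborel) \<partial>lborel)"
  proof -
    have "(\<integral>\<^sup>+r. pR r * (4 * (\<integral>\<^sup>+t. pA t * h (r * t) \<partial>lborel)) \<partial>lborel)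
        = (\<integral>\<^sup>+r. 4 * (pR r * (\<integral>\<^sup>+t. pA t * h (r * t) \<partial>lborel)) \<partial>lborel)"
      by (simp add: ac_simps)
    also have "\<dots> = 4 * (\<integral>\<^sup>+r. pR r * (\<integral>\<^sup>+t. pA t * h (r * t) \<partial>lborel) \<partial>lborel)"
      by (rule nn_integral_cmult) measurable
    finally have e: "(\<integral>\<^sup>+r. pR r * (4 * (\<integral>\<^sup>+t. pA t * h (r * t) \<partial>lborel)) \<partial>lborel)
        = 4 * (\<integral>\<^sup>+r. pR r * (\<integral>\<^sup>+t. pA t * h (r * t) \<partial>lborel) \<partial>lborel)" .
    have q4: "ennreal (1/4) * 4 = 1"
    proof -
      have "ennreal (1/4) * 4 = ennreal (1/4) * ennreal 4" by simp
      also have "\<dots> = ennreal (1/4 * 4)" by (rule ennreal_mult[symmetric]) auto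
      finally show ?thesis by simp
    qed
    show ?thesis by (simp only: e) (simp add: mult.assoc[symmetric] q4)
  qed
  also have "\<dots> = (\<integral>\<^sup>+z. (ennreal (1 / (pi * Ig)) * (\<integral>\<^sup>+y. ennreal (g (z\<^sup>2 + y\<^sup>2)) \<partial>lborel)) * h z \<partial>lborel)"
    unfolding pR_def by (rule radial_mix[OF gm gnn _ hm]) (use I in \<open>auto simp: Ig_def\<close>)
  finally show ?thesis unfolding Ig_def .
qed

theorem proposition2:
  fixes M :: "'a measure" and g :: "real \<Rightarrow> real" and mu sig rho :: real
    and U1 U2 R D :: "'a \<Rightarrow> real"
  assumes gen: "density_generator g"
    and sig: "sig > 0" and rho: "-1 < rho" "rho < 1"
    and M: "prob_space M"
    and indep: "prob_space.indep_vars M (\<lambda>_. borel)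
                  (\<lambda>i::nat. if i = 0 then U1 else if i = 1 then U2 else if i = 2 then R else D)
                  {0, 1, 2, 3}"
    and U1: "U1 \<in> borel_measurable M" "measure M {\<omega>\<in>space M. U1 \<omega> = -1} = 1/2"
            "measure M {\<omega>\<in>space M. U1 \<omega> = 1} = 1/2"
    and U2: "U2 \<in> borel_measurable M" "measure M {\<omega>\<in>space M. U2 \<omega> = -1} = 1/2"
            "measure M {\<omega>\<in>space M. U2 \<omega> = 1} = 1/2"
    and D: "distributed M lborel D (\<lambda>d. indicator {0<..<1} d * ennreal (2 / (pi * sqrt (1 - d\<^sup>2))))"
    and R: "distributed M lborel R
              (\<lambda>r. indicator {0<..} r * ennreal (2 * r * g (r\<^sup>2) / (LINT u:{0..}|lborel. g u)))"
  shows
    "let sigrho = sig * sqrt (2 * (1 - rho));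
         Z1 = (\<lambda>\<omega>. R \<omega> * D \<omega> * U1 \<omega>);
         Z2 = (\<lambda>\<omega>. R \<omega> * sqrt (1 - (D \<omega>)\<^sup>2) * U2 \<omega>);
         Zrho = (\<lambda>\<omega>. (1 / sqrt (2 * (1 - rho))) * ((1 - rho) * Z1 \<omega> - sqrt (1 - rho\<^sup>2) * Z2 \<omega>))
     in distributed M lborel (\<lambda>\<omega>. A_inv sigrho (Zrho \<omega>)) (uls_pdf mu sig rho g)
        \<and> (\<forall>(N :: 'b measure) (W :: 'b \<Rightarrow> real). prob_space N \<and> distributed N lborel W (uls_pdf mu sig rho g)
             \<longrightarrow> distr N lborel (\<lambda>x. A_map sigrho (W x)) = distr M lborel Zrho)"
proof -
  have gm[measurable]: "g \<in> borel_measurable borel" and gnn: "\<And>u. 0 \<le> u \<Longrightarrow> 0 \<le> g u"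
    and I: "0 < (LINT u:{0..}|lborel. g u)"
    using gen by (auto simp: density_generator_def)
  define Ig where "Ig = (LINT u:{0..}|lborel. g u)"
  have Ig: "0 < Ig" using I by (simp add: Ig_def)
  have Zg: "Zg g = pi * Ig" by (simp add: Zg_def Ig_def)
  define sr where "sr = sig * sqrt (2 * (1 - rho))"
  have sr0: "0 < sr" using sig rho by (simp add: sr_def)
  define Zr where "Zr = (\<lambda>\<omega>. (1 / sqrt (2 * (1 - rho))) * ((1 - rho) * (R \<omega> * D \<omega> * U1 \<omega>)
              - sqrt (1 - rho\<^sup>2) * (R \<omega> * sqrt (1 - (D \<omega>)\<^sup>2) * U2 \<omega>)))"
  define f1 where "f1 z = ennreal (1 / (pi * Ig)) * (\<integral>\<^sup>+y. ennreal (g (z\<^sup>2 + y\<^sup>2)) \<partial>lborel)" for z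
  have f1m[measurable]: "f1 \<in> borel_measurable borel" unfolding f1_def by measurable
  have Rm[measurable]: "R \<in> borel_measurable M" using R by (auto simp: distributed_def)
  have Dm[measurable]: "D \<in> borel_measurable M" using D by (auto simp: distributed_def)
  have U1m[measurable]: "U1 \<in> borel_measurable M" using U1 by simp
  have U2m[measurable]: "U2 \<in> borel_measurable M" using U2 by simp
  have Zm[measurable]: "Zr \<in> borel_measurable M" unfolding Zr_def by measurable
  have key: "(\<integral>\<^sup>+\<omega>. h (Zr \<omega>) \<partial>M) = (\<integral>\<^sup>+z. f1 z * h z \<partial>lborel)" if "h \<in> borel_measurable borel" for h
    unfolding Zr_def f1_def Ig_def by (rule zrho_key[OF gm gnn I rho M indep U1 U2 D R that])
  have Am[measurable]: "A_map sr \<in> borel_measurable borel" unfolding A_map_def by measurable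
  have Aim[measurable]: "A_inv sr \<in> borel_measurable borel" unfolding A_inv_def by measurable
  have AA: "A_map sr (A_inv sr z) = z" for z
  proof -
    have gen: "(1 / (1 + E)) / (1 - 1 / (1 + E)) = 1 / E" if "0 < E" for E :: real
      using that by (simp add: field_simps)
    have e: "A_inv sr z / (1 - A_inv sr z) = exp (sr * z)"
      unfolding A_inv_def gen[OF exp_gt_zero] by (simp add: exp_minus divide_inverse)
    show ?thesis unfolding A_map_def e using sr0 by simp
  qed
  have AA': "A_inv sr (A_map sr w) = w" if "0 < w" "w < 1" for w
  proof -
    have "exp (- sr * A_map sr w) = (1 - w) / w"
      unfolding A_map_def using sr0 that by (simp add: exp_minus ln_div exp_diff)
    then show ?thesis unfolding A_inv_def
    proof (simp only:)
      show "1 / (1 + (1 - w) / w) = w" using that by (simp add: field_simps)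
    qed
  qed
  define dA where "dA w = 1 / (sr * w * (1 - w))" for w
  have dAm[measurable]: "dA \<in> borel_measurable borel" unfolding dA_def by measurable
  have pdf_eq: "uls_pdf mu sig rho g w = f1 (A_map sr w) * ennreal (dA w) * indicator {0<..<1} w" for w
  proof (cases "0 < w \<and> w < 1")
    case True
    have "uls_pdf mu sig rho g w = ennreal (1 / (w * (1 - w) * sr)) *
           (ennreal (1 / Zg g) * (\<integral>\<^sup>+y. ennreal (g ((A_map sr w)\<^sup>2 + y\<^sup>2)) \<partial>lborel))"
      unfolding sr_def by (rule uls_pdf_eq[OF gm gnn _ sig rho]) (use Ig Zg True in auto)
    also have "\<dots> = f1 (A_map sr w) * ennreal (dA w)"
      unfolding f1_def dA_def Zg by (simp add: ac_simps)
    finally show ?thesis using True by simp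
  next
    case False
    then show ?thesis by (auto simp: uls_pdf_def)
  qed
  have pdfm[measurable]: "uls_pdf mu sig rho g \<in> borel_measurable borel"
    unfolding pdf_eq[abs_def] by measurable
  have subst: "(\<integral>\<^sup>+w. F (A_map sr w) * ennreal (dA w) * indicator {0<..<1} w \<partial>lborel) = (\<integral>\<^sup>+z. F z * indicator UNIV z \<partial>lborel)"
    if [measurable]: "F \<in> borel_measurable borel" for F
  proof (rule nn_subst_open[where l="\<lambda>n. 1 / (real n + 3)" and u="\<lambda>n. 1 - 1 / (real n + 3)"])
    show "decseq (\<lambda>n. 1 / (real n + 3))"
      by (auto simp: decseq_def intro!: divide_left_mono)
    show "incseq (\<lambda>n. 1 - 1 / (real n + 3))"
      by (auto simp: incseq_def intro!: divide_left_mono)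
    show "1 / (real n + 3) < 1 - 1 / (real n + 3)" for n
    proof -
      have "1 / (real n + 3) \<le> 1 / 3" by (auto intro!: divide_left_mono)
      then show ?thesis by linarith
    qed
    show "{0<..<1} = (\<Union>n. {1 / (real n + 3)..1 - 1 / (real n + 3)})"
    proof (intro equalityI subsetI)
      fix w :: real assume w: "w \<in> {0<..<1}"
      then have w0: "0 < w" "0 < 1 - w" by auto
      obtain n :: nat where n: "max (1/w) (1/(1-w)) < real n" using reals_Archimedean2 by blast
      have "1 / (real n + 3) \<le> w"
      proof -
        have "1 / w < real n + 3" using n by auto
        then show ?thesis using w0 by (simp add: field_simps)
      qed
      moreover have "1 / (real n + 3) \<le> 1 - w"
      proof -
        have "1 / (1 - w) < real n + 3" using n by auto
        then show ?thesis using w0 by (simp add: field_simps)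
      qed
      ultimately show "w \<in> (\<Union>n. {1 / (real n + 3)..1 - 1 / (real n + 3)})" by auto
    next
      fix w assume "w \<in> (\<Union>n. {1 / (real n + 3)..1 - 1 / (real n + 3)})"
      then obtain n where n: "1 / (real n + 3) \<le> w" "w \<le> 1 - 1 / (real n + 3)" by auto
      have "0 < 1 / (real n + 3)" by simp
      then show "w \<in> {0<..<1}" using n by (simp only: greaterThanLessThan_iff) linarith
    qed
    show "(A_map sr has_real_derivative dA w) (at w)" if "w \<in> {0<..<1}" for w
    proof -
      have w: "0 < w" "w < 1" using that by auto
      show ?thesis unfolding A_map_def[abs_def] dA_def
        by (rule derivative_eq_intros refl | use w in simp)+
    qed
    show "continuous_on {0<..<1} dA" unfolding dA_def
      by (intro continuous_intros) (use sr0 in auto)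
    show "0 \<le> dA w" if "w \<in> {0<..<1}" for w using that sr0 by (simp add: dA_def)
    show "A_map sr ` {0<..<1} = UNIV"
    proof (intro equalityI subsetI)
      fix z :: real
      have "A_inv sr z \<in> {0<..<1}"
      proof -
        have "0 < 1 + exp (- sr * z)" by (simp add: add_pos_pos)
        moreover have "1 < 1 + exp (- sr * z)" by simp
        ultimately show ?thesis unfolding A_inv_def by (simp add: field_simps)
      qed
      then show "z \<in> A_map sr ` {0<..<1}" using AA[of z] by (metis image_eqI)
    qed simp
  qed measurable
  have Ym[measurable]: "(\<lambda>\<omega>. A_inv sr (Zr \<omega>)) \<in> borel_measurable M" by measurable
  have distrY: "distr M lborel (\<lambda>\<omega>. A_inv sr (Zr \<omega>)) = density lborel (uls_pdf mu sig rho g)"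
  proof (rule measure_eqI)
    show "sets (distr M lborel (\<lambda>\<omega>. A_inv sr (Zr \<omega>))) = sets (density lborel (uls_pdf mu sig rho g))" by simp
    fix A assume "A \<in> sets (distr M lborel (\<lambda>\<omega>. A_inv sr (Zr \<omega>)))"
    then have A[measurable]: "A \<in> sets borel" by simp
    have "emeasure (distr M lborel (\<lambda>\<omega>. A_inv sr (Zr \<omega>))) A = (\<integral>\<^sup>+x. indicator A x \<partial>distr M lborel (\<lambda>\<omega>. A_inv sr (Zr \<omega>)))"
      by (rule nn_integral_indicator[symmetric]) simp
    also have "\<dots> = (\<integral>\<^sup>+\<omega>. indicator A (A_inv sr (Zr \<omega>)) \<partial>M)"
      by (rule nn_integral_distr) measurable
    also have "\<dots> = (\<integral>\<^sup>+z. f1 z * indicator A (A_inv sr z) \<partial>lborel)"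
      by (rule key) measurable
    also have "\<dots> = (\<integral>\<^sup>+z. (f1 z * indicator A (A_inv sr z)) * indicator UNIV z \<partial>lborel)" by simp
    also have "\<dots> = (\<integral>\<^sup>+w. (f1 (A_map sr w) * indicator A (A_inv sr (A_map sr w))) * ennreal (dA w) * indicator {0<..<1} w \<partial>lborel)"
      by (rule subst[symmetric]) measurable
    also have "\<dots> = (\<integral>\<^sup>+w. uls_pdf mu sig rho g w * indicator A w \<partial>lborel)"
    proof (rule nn_integral_cong)
      fix w :: real
      show "(f1 (A_map sr w) * indicator A (A_inv sr (A_map sr w))) * ennreal (dA w) * indicator {0<..<1} w
          = uls_pdf mu sig rho g w * indicator A w"
      proof (cases "0 < w \<and> w < 1")
        case True
        then show ?thesis unfolding pdf_eq using AA'[of w] by (simp add: ac_simps)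
      next
        case False
        then show ?thesis unfolding pdf_eq by simp
      qed
    qed
    also have "\<dots> = emeasure (density lborel (uls_pdf mu sig rho g)) A"
      by (rule emeasure_density[symmetric]) auto
    finally show "emeasure (distr M lborel (\<lambda>\<omega>. A_inv sr (Zr \<omega>))) A = emeasure (density lborel (uls_pdf mu sig rho g)) A" .
  qed
  have P1: "distributed M lborel (\<lambda>\<omega>. A_inv sr (Zr \<omega>)) (uls_pdf mu sig rho g)"
    unfolding distributed_def using distrY by simp
  have P2: "distr N lborel (\<lambda>x. A_map sr (W x)) = distr M lborel Zr"
    if "distributed N lborel W (uls_pdf mu sig rho g)" for N :: "'b measure" and W
  proof -
    have Wm: "W \<in> measurable N lborel" and dW: "distr N lborel W = density lborel (uls_pdf mu sig rho g)"
      using that by (auto simp: distributed_def)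
    have Am': "A_map sr \<in> measurable lborel lborel" by simp
    have "distr N lborel (\<lambda>x. A_map sr (W x)) = distr (distr N lborel W) lborel (A_map sr)"
      using distr_distr[OF Am' Wm] by (simp add: comp_def)
    also have "\<dots> = distr (distr M lborel (\<lambda>\<omega>. A_inv sr (Zr \<omega>))) lborel (A_map sr)"
      unfolding dW distrY ..
    also have "\<dots> = distr M lborel (\<lambda>\<omega>. A_map sr (A_inv sr (Zr \<omega>)))"
      by (subst distr_distr) (auto simp: comp_def)
    also have "\<dots> = distr M lborel Zr" unfolding AA ..
    finally show ?thesis .
  qed
  show ?thesis
    unfolding Let_def
  proof (intro conjI allI impI)
    show "distributed M lborel (\<lambda>\<omega>. A_inv (sig * sqrt (2 * (1 - rho)))
        (1 / sqrt (2 * (1 - rho)) * ((1 - rho) * (R \<omega> * D \<omega> * U1 \<omega>) - sqrt (1 - rho\<^sup>2) * (R \<omega> * sqrt (1 - (D \<omega>)\<^sup>2) * U2 \<omega>))))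
        (uls_pdf mu sig rho g)"
      using P1 unfolding Zr_def sr_def .
    fix N :: "'b measure" and W
    assume "prob_space N \<and> distributed N lborel W (uls_pdf mu sig rho g)"
    then show "distr N lborel (\<lambda>x. A_map (sig * sqrt (2 * (1 - rho))) (W x)) =
       distr M lborel (\<lambda>\<omega>. 1 / sqrt (2 * (1 - rho)) * ((1 - rho) * (R \<omega> * D \<omega> * U1 \<omega>) - sqrt (1 - rho\<^sup>2) * (R \<omega> * sqrt (1 - (D \<omega>)\<^sup>2) * U2 \<omega>)))"
      using P2[of N W] unfolding Zr_def sr_def by blast
  qed
qed

end
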